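(* Let $p\in[1,2]$, $p^*=\frac{p}{p-1}$ ($p^*=\infty$ if $p=1$), and let $m\ge2$ be an integer. Then for every $N\in\mathbb{N}$ and every real array $(y_{i_1\dots i_m})_{i_1,\dots,i_m=1}^N$, \[ \left(\sum_{i_1,\dots,i_m=1}^N|y_{i_1\dots i_m}|^2\right)^{1/2}\le D_{(m+1),p^*}\left(\int_{[0,1]^m}\left|\sum_{i_1,\dots,i_m=1}^N r_{i_1}(t_1)\cdots r_{i_m}(t_m)y_{i_1\dots i_m}\right|^p dt_1\cdots dt_m\right)^{1/p}. \] Consequently $(\mathrm{A}_p)^m\le D_{(m+1),p^*}$.
   Context: Scalars are real. $X_q=\ell_q$ for $1\le q<\infty$, $X_\infty=c_0$, $(e_k)$ canonical unit vectors; $\|T\|$ is the supremum of $|T(x^{(1)},\dots,x^{(M)})|$ over the product of the closed unit balls. $r_j(t)=\operatorname{sign}(\sin(2^j\pi t))$ are the Rademacher functions. For $0<r<\infty$, $\mathrm{A}_r$ is the optimal constant such that $\left(\sum_{j=1}^n|a_j|^2\right)^{1/2}\le \mathrm{A}_r\left(\int_0^1|\sum_{j=1}^n a_jr_j(t)|^rdt\right)^{1/r}$ for all $n$ and real $a_j$. For an integer $M\ge3$ and $q\in[2,\infty]$, $D_{(M),q}$ denotes the optimal constant $D$ such that $\left(\sum_{i_2,\dots,i_M}\left(\sum_{i_1}|T(e_{i_1},\dots,e_{i_M})|^{\frac{q}{q-1}}\right)^{2\frac{q-1}{q}}\right)^{1/2}\le D\|T\|$ for all continuous $M$-linear $T:X_q\times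 X_\infty\times\cdots\times X_\infty\to\mathbb{R}$ ($q/(q-1)$ read as $1$ when $q=\infty$). *)

theory Defs
  imports "HOL-Analysis.Analysis"
begin

definition lq_space :: "real \<Rightarrow> (nat \<Rightarrow> real) set" where
  "lq_space q = {x. summable (\<lambda>n. \<bar>x n\<bar> powr q)}"

definition lq_norm :: "real \<Rightarrow> (nat \<Rightarrow> real) \<Rightarrow> real" where
  "lq_norm q x = (\<Sum>n. \<bar>x n\<bar> powr q) powr (1 / q)"

definition c0_space :: "(nat \<Rightarrow> real) set" where
  "c0_space = {x. x \<longlonglongrightarrow> 0}"

definition c0_norm :: "(nat \<Rightarrow> real) \<Rightarrow> real" where
  "c0_norm x = (SUP n. \<bar>x n\<bar>)"

definition X_space :: "ereal \<Rightarrow> (nat \<Rightarrow> real) set" where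
  "X_space q = (if q = \<infinity> then c0_space else lq_space (real_of_ereal q))"

definition X_norm :: "ereal \<Rightarrow> (nat \<Rightarrow> real) \<Rightarrow> real" where
  "X_norm q x = (if q = \<infinity> then c0_norm x else lq_norm (real_of_ereal q) x)"

definition unit_vec :: "nat \<Rightarrow> nat \<Rightarrow> real" where
  "unit_vec j = (\<lambda>n. if n = j then 1 else 0)"

text \<open>An M-tuple of vectors is a function x :: nat => (nat => real); slot k < M holds
  the k-th argument (slot 0 is the X_q argument), slots k >= M are zero.\<close>

definition slot_space :: "ereal \<Rightarrow> nat \<Rightarrow> (nat \<Rightarrow> real) set" where
  "slot_space q k = (if k = 0 then X_space q else c0_space)"

definition slot_norm :: "ereal \<Rightarrow> nat \<Rightarrow> (nat \<Rightarrow> real) \<Rightarrow> real" where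
  "slot_norm q k v = (if k = 0 then X_norm q v else c0_norm v)"

definition tuples :: "nat \<Rightarrow> ereal \<Rightarrow> (nat \<Rightarrow> nat \<Rightarrow> real) set" where
  "tuples M q = {x. (\<forall>k<M. x k \<in> slot_space q k) \<and> (\<forall>k\<ge>M. x k = (\<lambda>_. 0))}"

definition unit_tuples :: "nat \<Rightarrow> ereal \<Rightarrow> (nat \<Rightarrow> nat \<Rightarrow> real) set" where
  "unit_tuples M q = {x \<in> tuples M q. \<forall>k<M. slot_norm q k (x k) \<le> 1}"

definition multilinear_form :: "nat \<Rightarrow> ereal \<Rightarrow> ((nat \<Rightarrow> nat \<Rightarrow> real) \<Rightarrow> real) \<Rightarrow> bool" where
  "multilinear_form M q T \<longleftrightarrow>
     (\<forall>x\<in>tuples M q. \<forall>k<M. \<forall>u\<in>slot_space q k. \<forall>v\<in>slot_space q k. \<forall>a b::real.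
        T (x(k := (\<lambda>n. a * u n + b * v n))) = a * T (x(k := u)) + b * T (x(k := v)))"

definition form_norm :: "nat \<Rightarrow> ereal \<Rightarrow> ((nat \<Rightarrow> nat \<Rightarrow> real) \<Rightarrow> real) \<Rightarrow> real" where
  "form_norm M q T = (SUP x\<in>unit_tuples M q. \<bar>T x\<bar>)"

text \<open>Continuity of a multilinear form is (equivalently) boundedness on the product of
  the closed unit balls.\<close>
definition cont_multilinear_form :: "nat \<Rightarrow> ereal \<Rightarrow> ((nat \<Rightarrow> nat \<Rightarrow> real) \<Rightarrow> real) \<Rightarrow> bool" where
  "cont_multilinear_form M q T \<longleftrightarrow>
     multilinear_form M q T \<and> bdd_above ((\<lambda>x. \<bar>T x\<bar>) ` unit_tuples M q)"

definition conj_exp :: "ereal \<Rightarrow> real" where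
  "conj_exp q = (if q = \<infinity> then 1 else real_of_ereal q / (real_of_ereal q - 1))"

text \<open>T(e_{i_1}, ..., e_{i_M}) with i_1 = j and i_k = i k for 1 <= k < M.\<close>
definition coeff :: "nat \<Rightarrow> ((nat \<Rightarrow> nat \<Rightarrow> real) \<Rightarrow> real) \<Rightarrow> nat \<Rightarrow> (nat \<Rightarrow> nat) \<Rightarrow> real" where
  "coeff M T j i = T (\<lambda>k. if k = 0 then unit_vec j else if k < M then unit_vec (i k) else (\<lambda>_. 0))"

text \<open>The mixed (q*,2) sum truncated to indices < N; the full (infinite) sum is the
  supremum over N of these truncations (all terms are nonnegative).\<close>
definition mixed_sum :: "nat \<Rightarrow> ereal \<Rightarrow> ((nat \<Rightarrow> nat \<Rightarrow> real) \<Rightarrow> real) \<Rightarrow> nat \<Rightarrow> real" where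
  "mixed_sum M q T N =
     (\<Sum>i\<in>({1..<M} \<rightarrow>\<^sub>E {..<N}).
        (\<Sum>j<N. \<bar>coeff M T j i\<bar> powr conj_exp q) powr (2 / conj_exp q)) powr (1/2)"

definition D_const :: "nat \<Rightarrow> ereal \<Rightarrow> real" where
  "D_const M q = Inf {D. D \<ge> 0 \<and> (\<forall>T. cont_multilinear_form M q T \<longrightarrow>
                         (\<forall>N. mixed_sum M q T N \<le> D * form_norm M q T))}"

definition rademacher :: "nat \<Rightarrow> real \<Rightarrow> real" where
  "rademacher j t = sgn (sin (2 ^ j * pi * t))"

definition khintchine_A :: "real \<Rightarrow> real" where
  "khintchine_A r = Inf {A. \<forall>(n::nat) (a::nat \<Rightarrow> real).
      sqrt (\<Sum>j=1..n. (a j)\<^sup>2) \<le>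
        A * (LINT t:{0..1}|lborel. \<bar>\<Sum>j=1..n. a j * rademacher j t\<bar> powr r) powr (1 / r)}"

definition conj_ereal :: "real \<Rightarrow> ereal" where
  "conj_ereal p = (if p = 1 then \<infinity> else ereal (p / (p - 1)))"

end

theory Submission
  imports Defs
begin

definition sg :: "'v set \<Rightarrow> 'v \<Rightarrow> real" where "sg A v = (if v \<in> A then -1 else 1)"
definition chi :: "'v set \<Rightarrow> 'v set \<Rightarrow> real" where "chi S A = (\<Prod>v\<in>S. sg A v)"
definition EV :: "'v set \<Rightarrow> ('v set \<Rightarrow> real) \<Rightarrow> real" where
  "EV V f = (\<Sum>A\<in>Pow V. f A) / 2 ^ card V"

lemma sum_Pow_insert:
  assumes "finite W" "v \<notin> W"
  shows "(\<Sum>A\<in>Pow (insert v W). f A) = (\<Sum>A\<in>Pow W. f A) + (\<Sum>A\<in>Pow W. f (insert v A))"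
proof -
  have "Pow (insert v W) = Pow W \<union> insert v ` Pow W" by (rule Pow_insert)
  moreover have "Pow W \<inter> insert v ` Pow W = {}" using assms(2) by auto
  moreover have "inj_on (insert v) (Pow W)" using assms(2) unfolding inj_on_def
    by (metis Pow_iff insert_ident subset_iff)
  ultimately show ?thesis using assms(1) by (simp add: sum.union_disjoint sum.reindex)
qed

lemma EV_insert:
  assumes "finite W" "v \<notin> W"
  shows "EV (insert v W) f = (EV W f + EV W (\<lambda>A. f (insert v A))) / 2"
  using assms unfolding EV_def by (simp add: sum_Pow_insert field_simps)

lemma EV_empty: "EV {} f = f {}"
  unfolding EV_def by simp

lemma EV_mono: "(\<And>A. A \<subseteq> V \<Longrightarrow> f A \<le> g A) \<Longrightarrow> EV V f \<le> EV V g"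
  unfolding EV_def by (intro divide_right_mono sum_mono) auto

lemma EV_cong: "(\<And>A. A \<subseteq> V \<Longrightarrow> f A = g A) \<Longrightarrow> EV V f = EV V g"
  unfolding EV_def by (intro arg_cong2[where f="(/)"] sum.cong) auto

lemma EV_add: "EV V (\<lambda>A. f A + g A) = EV V f + EV V g"
  unfolding EV_def by (simp add: sum.distrib add_divide_distrib)

lemma EV_diff: "EV V (\<lambda>A. f A - g A) = EV V f - EV V g"
  unfolding EV_def by (simp add: sum_subtractf diff_divide_distrib)

lemma EV_cmult: "EV V (\<lambda>A. c * f A) = c * EV V f"
  unfolding EV_def by (simp add: sum_distrib_left)

lemma EV_sum: "EV V (\<lambda>A. \<Sum>i\<in>I. f i A) = (\<Sum>i\<in>I. EV V (f i))"
  unfolding EV_def by (simp add: sum.swap[of _ _ I] sum_divide_distrib)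

lemma EV_const: "finite V \<Longrightarrow> EV V (\<lambda>_. c) = c"
  unfolding EV_def by (simp add: card_Pow)

lemma EV_nonneg: "(\<And>A. A \<subseteq> V \<Longrightarrow> 0 \<le> f A) \<Longrightarrow> 0 \<le> EV V f"
  unfolding EV_def by (intro divide_nonneg_pos sum_nonneg) auto

lemma EV_symdiff:
  assumes "E \<subseteq> V"
  shows "EV V (\<lambda>A. f ((A - E) \<union> (E - A))) = EV V f"
proof -
  have b: "bij_betw (\<lambda>A. (A - E) \<union> (E - A)) (Pow V) (Pow V)"
    by (rule bij_betw_byWitness[where f'="\<lambda>A. (A - E) \<union> (E - A)"]) (use assms in auto)
  show ?thesis unfolding EV_def
    using sum.reindex_bij_betw[OF b, of f] by simp
qed

lemma sg_sq: "sg A v * sg A v = 1" unfolding sg_def by simp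
lemma abs_sg: "\<bar>sg A v\<bar> = 1" unfolding sg_def by simp
lemma abs_chi: "\<bar>chi S A\<bar> = 1" unfolding chi_def by (simp add: abs_prod abs_sg)
lemma chi_sq: "chi S A * chi S A = 1"
  using abs_chi[of S A] by (metis abs_mult_self_eq mult_1_right)

lemma chi_mult:
  assumes "finite S" "finite S'"
  shows "chi S A * chi S' A = chi ((S - S') \<union> (S' - S)) A"
proof -
  have 1: "chi S A = chi (S - S') A * chi (S \<inter> S') A"
    unfolding chi_def using assms
    by (subst prod.union_disjoint[symmetric]) (auto intro: prod.cong)
  have 2: "chi S' A = chi (S' - S) A * chi (S \<inter> S') A"
    unfolding chi_def using assms
    by (subst prod.union_disjoint[symmetric]) (auto intro: prod.cong)
  have 3: "chi ((S - S') \<union> (S' - S)) A = chi (S - S') A * chi (S' - S) A"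
    unfolding chi_def using assms by (subst prod.union_disjoint) auto
  show ?thesis unfolding 1 2 3
    using chi_sq[of "S \<inter> S'" A] by (simp add: algebra_simps)
qed

lemma EV_chi_zero:
  assumes "finite V" "S \<subseteq> V" "v \<in> S"
  shows "EV V (chi S) = 0"
proof -
  have fS: "finite S" using assms finite_subset by blast
  have flip: "chi S ((A - {v}) \<union> ({v} - A)) = - chi S A" for A
  proof -
    have "chi S B = sg B v * chi (S - {v}) B" for B
      unfolding chi_def using fS assms(3) by (simp add: prod.remove)
    moreover have "chi (S - {v}) ((A - {v}) \<union> ({v} - A)) = chi (S - {v}) A"
      unfolding chi_def by (intro prod.cong) (auto simp: sg_def)
    moreover have "sg ((A - {v}) \<union> ({v} - A)) v = - sg A v" unfolding sg_def by auto
    ultimately show ?thesis by simp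
  qed
  have "EV V (chi S) = EV V (\<lambda>A. chi S ((A - {v}) \<union> ({v} - A)))"
    using EV_symdiff[of "{v}" V "chi S"] assms by auto
  also have "\<dots> = - EV V (chi S)" using EV_cmult[of V "-1" "chi S"] by (simp add: flip)
  finally show ?thesis by simp
qed

lemma EV_chi_orth:
  assumes "finite V" "S \<subseteq> V" "S' \<subseteq> V"
  shows "EV V (\<lambda>A. chi S A * chi S' A) = (if S = S' then 1 else 0)"
proof -
  have f: "finite S" "finite S'" using assms finite_subset by auto
  show ?thesis
  proof (cases "S = S'")
    case True then show ?thesis using EV_const[OF assms(1), of 1] by (simp add: chi_sq)
  next
    case False
    then obtain v where "v \<in> (S - S') \<union> (S' - S)" by blast
    then have "EV V (chi ((S - S') \<union> (S' - S))) = 0"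
      by (intro EV_chi_zero) (use assms in auto)
    then show ?thesis using False by (simp add: chi_mult[OF f])
  qed
qed

lemma EV_CS:
  "(EV V (\<lambda>A. f A * g A))^2 \<le> EV V (\<lambda>A. (f A)^2) * EV V (\<lambda>A. (g A)^2)"
proof -
  have "(\<Sum>A\<in>Pow V. f A * g A)^2 \<le> (\<Sum>A\<in>Pow V. (f A)^2) * (\<Sum>A\<in>Pow V. (g A)^2)"
    by (rule Cauchy_Schwarz_ineq_sum)
  then show ?thesis unfolding EV_def
    by (simp add: power_divide divide_right_mono power2_eq_square)
qed

lemma chi_restrict_notin:
  assumes "v \<notin> A" "finite S"
  shows "chi S A = chi (S - {v}) A"
proof (cases "v \<in> S")
  case True
  then show ?thesis unfolding chi_def using assms by (simp add: prod.remove sg_def)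
next
  case False then show ?thesis by simp
qed

lemma chi_insert_notin:
  assumes "v \<notin> S" "v \<notin> A"
  shows "chi S (insert v A) = chi S A"
  unfolding chi_def using assms by (intro prod.cong) (auto simp: sg_def)

lemma chi_insert_in:
  assumes "v \<in> S" "v \<notin> A" "finite S"
  shows "chi S (insert v A) = - chi (S - {v}) A"
proof -
  have "chi S (insert v A) = sg (insert v A) v * chi (S - {v}) (insert v A)"
    unfolding chi_def using assms by (simp add: prod.remove)
  also have "chi (S - {v}) (insert v A) = chi (S - {v}) A"
    by (rule chi_insert_notin) (use assms in auto)
  finally show ?thesis by (simp add: sg_def)
qed

lemma bonami_alg:
  fixes a b G H X c :: real
  assumes "0 \<le> a" "0 \<le> b" "G \<le> 9 * c * a^2" "H \<le> c * b^2" "X^2 \<le> G * H" "0 \<le> X" "0 \<le> c"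
    "0 \<le> G" "0 \<le> H"
  shows "G + 6 * X + H \<le> 9 * c * (a + b)^2"
proof -
  have "G * H \<le> (9 * c * a^2) * (c * b^2)"
    using assms by (intro mult_mono) auto
  also have "\<dots> = (3 * c * a * b)^2" by (simp add: power2_eq_square algebra_simps)
  finally have "X^2 \<le> (3 * c * a * b)^2" using assms(5) by linarith
  moreover have "0 \<le> 3 * c * a * b" using assms by simp
  ultimately have X: "X \<le> 3 * c * a * b"
    by (rule power2_le_imp_le)
  have e: "9 * c * (a + b)^2 = 9 * c * a^2 + 6 * (3 * c * a * b) + 9 * (c * b^2)"
    by (simp add: power2_eq_square algebra_simps)
  have "0 \<le> c * b^2" using assms by simp
  then show ?thesis unfolding e using X assms(3,4) by linarith
qed

lemma EV_divide: "EV V (\<lambda>A. f A / c) = EV V f / c"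
  unfolding EV_def by (simp add: sum_divide_distrib mult.commute)

lemma quart_id: "(((x::real) + y)^4 + (x - y)^4) / 2 = x^4 + 6 * (x^2 * y^2) + y^4"
proof -
  have "(x + y)^4 + (x - y)^4 = 2 * (x^4 + 6 * (x^2 * y^2) + y^4)" by algebra
  then show ?thesis by simp
qed

lemma sq_id: "(((x::real) + y)^2 + (x - y)^2) / 2 = x^2 + y^2"
proof -
  have "(x + y)^2 + (x - y)^2 = 2 * (x^2 + y^2)" by algebra
  then show ?thesis by simp
qed

lemma bonami:
  assumes "finite V"
  shows "finite I \<Longrightarrow> (\<forall>i\<in>I. S i \<subseteq> V \<and> card (S i) \<le> d) \<Longrightarrow>
    EV V (\<lambda>A. (\<Sum>i\<in>I. b i * chi (S i) A)^4) \<le> 9^d * (EV V (\<lambda>A. (\<Sum>i\<in>I. b i * chi (S i) A)^2))^2"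
  using assms
proof (induction V arbitrary: I S b d rule: finite_induct)
  case empty
  then have "S i = {}" if "i \<in> I" for i using that by auto
  then have ch: "chi (S i) {} = 1" if "i \<in> I" for i using that by (simp add: chi_def)
  define c where "c = (\<Sum>i\<in>I. b i)"
  have e: "(\<Sum>i\<in>I. b i * chi (S i) {}) = c" unfolding c_def by (intro sum.cong) (auto simp: ch)
  have "c^4 \<le> 9^d * (c^2)^2"
    by (simp add: power_mult[symmetric]) (simp add: mult_le_cancel_right1 one_le_power)
  then show ?case by (simp add: EV_empty e)
next
  case (insert v W)
  define f where "f A = (\<Sum>i\<in>I. b i * chi (S i) A)" for A
  define I1 where "I1 = {i\<in>I. v \<notin> S i}"
  define I2 where "I2 = {i\<in>I. v \<in> S i}"
  define g where "g A = (\<Sum>i\<in>I1. b i * chi (S i) A)" for A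
  define h where "h A = (\<Sum>i\<in>I2. b i * chi (S i - {v}) A)" for A
  have fin: "finite I1" "finite I2" using insert(4) by (auto simp: I1_def I2_def)
  have split: "I = I1 \<union> I2" "I1 \<inter> I2 = {}" by (auto simp: I1_def I2_def)
  have finS: "finite (S i)" if "i \<in> I" for i
    using insert(5) that insert(1) finite_subset by (metis finite_insert)
  have fA: "f A = g A + h A" if "A \<subseteq> W" for A
  proof -
    have vA: "v \<notin> A" using that insert(2) by auto
    have "f A = g A + (\<Sum>i\<in>I2. b i * chi (S i) A)"
      unfolding f_def g_def using fin split by (simp add: sum.union_disjoint)
    also have "(\<Sum>i\<in>I2. b i * chi (S i) A) = h A"
      unfolding h_def
    proof (rule sum.cong[OF refl])
      fix i assume "i \<in> I2"
      then have "chi (S i) A = chi (S i - {v}) A" using chi_restrict_notin[OF vA finS] by (auto simp: I2_def)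
      then show "b i * chi (S i) A = b i * chi (S i - {v}) A" by simp
    qed
    finally show ?thesis .
  qed
  have fiA: "f (insert v A) = g A - h A" if "A \<subseteq> W" for A
  proof -
    have vA: "v \<notin> A" using that insert(2) by auto
    have "f (insert v A) = (\<Sum>i\<in>I1. b i * chi (S i) (insert v A)) + (\<Sum>i\<in>I2. b i * chi (S i) (insert v A))"
      unfolding f_def using fin split by (simp add: sum.union_disjoint)
    also have "(\<Sum>i\<in>I1. b i * chi (S i) (insert v A)) = g A"
      unfolding g_def
    proof (rule sum.cong[OF refl])
      fix i assume "i \<in> I1"
      then have "chi (S i) (insert v A) = chi (S i) A" using chi_insert_notin vA by (auto simp: I1_def)
      then show "b i * chi (S i) (insert v A) = b i * chi (S i) A" by simp
    qed
    also have "(\<Sum>i\<in>I2. b i * chi (S i) (insert v A)) = - h A"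
      unfolding h_def sum_negf[symmetric]
    proof (rule sum.cong[OF refl])
      fix i assume "i \<in> I2"
      then have iI: "i \<in> I" "v \<in> S i" by (auto simp: I2_def)
      have "chi (S i) (insert v A) = - chi (S i - {v}) A" by (rule chi_insert_in[OF iI(2) vA finS[OF iI(1)]])
      then show "b i * chi (S i) (insert v A) = - (b i * chi (S i - {v}) A)" by simp
    qed
    finally show ?thesis by simp
  qed
  have IHg: "EV W (\<lambda>A. (g A)^4) \<le> 9^d * (EV W (\<lambda>A. (g A)^2))^2"
    unfolding g_def using insert(3)[OF fin(1), of S d b] insert(5) by (auto simp: I1_def)
  have IHh: "EV W (\<lambda>A. (h A)^4) \<le> 9^(d-1) * (EV W (\<lambda>A. (h A)^2))^2"
  proof -
    have "\<forall>i\<in>I2. S i - {v} \<subseteq> W \<and> card (S i - {v}) \<le> d - 1"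
      using insert(5) finS by (auto simp: I2_def card_Diff_singleton)
    then show ?thesis unfolding h_def using insert(3)[OF fin(2), of "\<lambda>i. S i - {v}" "d-1" b] by simp
  qed
  have E4: "EV (insert v W) (\<lambda>A. (f A)^4) = EV W (\<lambda>A. (g A)^4) + 6 * EV W (\<lambda>A. (g A)^2 * (h A)^2) + EV W (\<lambda>A. (h A)^4)"
  proof -
    have "EV (insert v W) (\<lambda>A. (f A)^4) = (EV W (\<lambda>A. (g A + h A)^4) + EV W (\<lambda>A. (g A - h A)^4)) / 2"
      by (simp add: EV_insert[OF insert(1,2)] fA fiA cong: EV_cong)
    also have "\<dots> = EV W (\<lambda>A. ((g A + h A)^4 + (g A - h A)^4) / 2)"
      by (simp add: EV_add[symmetric] EV_divide)
    also have "\<dots> = EV W (\<lambda>A. (g A)^4 + 6 * ((g A)^2 * (h A)^2) + (h A)^4)"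
      by (rule EV_cong) (simp add: quart_id)
    finally show ?thesis by (simp add: EV_add EV_cmult)
  qed
  have E2: "EV (insert v W) (\<lambda>A. (f A)^2) = EV W (\<lambda>A. (g A)^2) + EV W (\<lambda>A. (h A)^2)"
  proof -
    have "EV (insert v W) (\<lambda>A. (f A)^2) = (EV W (\<lambda>A. (g A + h A)^2) + EV W (\<lambda>A. (g A - h A)^2)) / 2"
      by (simp add: EV_insert[OF insert(1,2)] fA fiA cong: EV_cong)
    also have "\<dots> = EV W (\<lambda>A. ((g A + h A)^2 + (g A - h A)^2) / 2)"
      by (simp add: EV_add[symmetric] EV_divide)
    also have "\<dots> = EV W (\<lambda>A. (g A)^2 + (h A)^2)"
      by (rule EV_cong) (simp add: sq_id)
    finally show ?thesis by (simp add: EV_add)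
  qed
  have CS: "(EV W (\<lambda>A. (g A)^2 * (h A)^2))^2 \<le> EV W (\<lambda>A. (g A)^4) * EV W (\<lambda>A. (h A)^4)"
    using EV_CS[of W "\<lambda>A. (g A)^2" "\<lambda>A. (h A)^2"] by (simp add: power_mult[symmetric])
  have Xnn: "0 \<le> EV W (\<lambda>A. (g A)^2 * (h A)^2)" by (rule EV_nonneg) simp
  have ann: "0 \<le> EV W (\<lambda>A. (g A)^2)" "0 \<le> EV W (\<lambda>A. (h A)^2)" by (auto intro: EV_nonneg)
  show ?case
  proof (cases "d = 0")
    case True
    then have "I2 = {}" using insert(5) finS by (auto simp: I2_def card_eq_0_iff)
    then have "h = (\<lambda>A. 0)" unfolding h_def by auto
    then show ?thesis unfolding f_def[symmetric] E4 E2 using IHg True by (simp add: EV_const[OF insert(1)])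
  next
    case False
    then have d: "(9::real)^d = 9 * 9^(d-1)" by (metis power_eq_if)
    show ?thesis unfolding f_def[symmetric] E4 E2 d
      by (rule bonami_alg[OF ann _ IHh CS Xnn]) (use IHg d in \<open>auto intro: EV_nonneg\<close>)
  qed
qed

lemma sqrt_abs_aux: "(x::real) * x = sqrt \<bar>x\<bar> * (\<bar>x\<bar> * sqrt \<bar>x\<bar>)"
proof -
  have "sqrt \<bar>x\<bar> * sqrt \<bar>x\<bar> = \<bar>x\<bar>" by simp
  then have "sqrt \<bar>x\<bar> * (\<bar>x\<bar> * sqrt \<bar>x\<bar>) = \<bar>x\<bar> * \<bar>x\<bar>" by (metis mult.assoc mult.commute)
  then show ?thesis by (simp only: abs_mult_self_eq)
qed

lemma sq_sqrt_abs: "(sqrt \<bar>x::real\<bar>)^2 = \<bar>x\<bar>" by simp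
lemma sq_abs_sqrt_abs: "(\<bar>x::real\<bar> * sqrt \<bar>x\<bar>)^2 = \<bar>x\<bar>^3"
  by (simp only: power_mult_distrib sq_sqrt_abs) (simp add: power3_eq_cube power2_eq_square)

lemma khintchine_from_moment:
  fixes f :: "'v set \<Rightarrow> real"
  assumes "EV V (\<lambda>A. (f A)^4) \<le> C^2 * (EV V (\<lambda>A. (f A)^2))^2" "0 \<le> C"
  shows "sqrt (EV V (\<lambda>A. (f A)^2)) \<le> C * EV V (\<lambda>A. \<bar>f A\<bar>)"
proof -
  define s where "s = EV V (\<lambda>A. (f A)^2)"
  define t where "t = EV V (\<lambda>A. \<bar>f A\<bar>)"
  define u where "u = EV V (\<lambda>A. \<bar>f A\<bar>^3)"
  define w where "w = EV V (\<lambda>A. (f A)^4)"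
  have s0: "0 \<le> s" unfolding s_def by (rule EV_nonneg) simp
  have t0: "0 \<le> t" unfolding t_def by (rule EV_nonneg) simp
  have u0: "0 \<le> u" unfolding u_def by (rule EV_nonneg) simp
  have 1: "s^2 \<le> t * u"
  proof -
    have "s = EV V (\<lambda>A. sqrt \<bar>f A\<bar> * (\<bar>f A\<bar> * sqrt \<bar>f A\<bar>))"
      unfolding s_def by (rule EV_cong) (simp only: power2_eq_square sqrt_abs_aux)
    then have "s^2 \<le> EV V (\<lambda>A. (sqrt \<bar>f A\<bar>)^2) * EV V (\<lambda>A. (\<bar>f A\<bar> * sqrt \<bar>f A\<bar>)^2)"
      using EV_CS by metis
    also have "\<dots> = t * u" unfolding t_def u_def
      by (simp only: sq_sqrt_abs sq_abs_sqrt_abs)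
    finally show ?thesis .
  qed
  have 2: "u^2 \<le> s * w"
  proof -
    have "u = EV V (\<lambda>A. \<bar>f A\<bar> * (f A)^2)"
      unfolding u_def by (rule EV_cong) (simp add: power2_eq_square power3_eq_cube)
    then have "u^2 \<le> EV V (\<lambda>A. \<bar>f A\<bar>^2) * EV V (\<lambda>A. ((f A)^2)^2)"
      using EV_CS by metis
    also have "\<dots> = s * w" unfolding s_def w_def by (simp add: power_mult[symmetric])
    finally show ?thesis .
  qed
  have 3: "w \<le> C^2 * s^2" using assms(1) unfolding w_def s_def .
  show ?thesis
  proof (cases "s = 0")
    case True then show ?thesis unfolding s_def[symmetric] t_def[symmetric] using t0 assms(2) by simp
  next
    case False
    then have sp: "0 < s" using s0 by simp
    have "u^2 \<le> s * (C^2 * s^2)" using 2 3 sp by (meson mult_left_mono order.trans less_imp_le)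
    also have "s * (C^2 * s^2) = (C * s * sqrt s)^2"
      using s0 by (simp add: power_mult_distrib power2_eq_square)
    finally have "u \<le> C * s * sqrt s"
      by (rule power2_le_imp_le) (use s0 assms(2) in simp)
    then have "s^2 \<le> t * (C * s * sqrt s)" using 1 t0 by (meson mult_left_mono order.trans)
    then have "s * s \<le> (C * t * sqrt s) * s" by (simp add: power2_eq_square algebra_simps)
    then have "s \<le> C * t * sqrt s" using sp by simp
    then have "sqrt s * sqrt s \<le> (C * t) * sqrt s" using s0 by simp
    moreover have "0 < sqrt s" using sp by simp
    ultimately have "sqrt s \<le> C * t" by (rule mult_right_le_imp_le)
    then show ?thesis unfolding s_def t_def .
  qed
qed

lemma khintchine_chaos:
  assumes "finite V" "finite I" "\<forall>i\<in>I. S i \<subseteq> V \<and> card (S i) \<le> d"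
  shows "sqrt (EV V (\<lambda>A. (\<Sum>i\<in>I. b i * chi (S i) A)^2)) \<le> 3^d * EV V (\<lambda>A. \<bar>\<Sum>i\<in>I. b i * chi (S i) A\<bar>)"
proof (rule khintchine_from_moment)
  show "EV V (\<lambda>A. (\<Sum>i\<in>I. b i * chi (S i) A)^4) \<le> (3^d)^2 * (EV V (\<lambda>A. (\<Sum>i\<in>I. b i * chi (S i) A)^2))^2"
  proof -
    have "((3::real)^d)^2 = (3^2)^d" by (metis power_mult mult.commute)
    then have "((3::real)^d)^2 = 9^d" by simp
    then show ?thesis using bonami[OF assms] by simp
  qed
qed simp

lemma holder_sum:
  fixes a b :: "'j \<Rightarrow> real"
  assumes "finite J" "1 < p" "1 < q" "1/p + 1/q = 1" "\<forall>j\<in>J. 0 \<le> a j" "\<forall>j\<in>J. 0 \<le> b j"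
  shows "(\<Sum>j\<in>J. a j * b j) \<le> (\<Sum>j\<in>J. a j powr p) powr (1/p) * (\<Sum>j\<in>J. b j powr q) powr (1/q)"
proof (cases "(\<Sum>j\<in>J. a j powr p) = 0 \<or> (\<Sum>j\<in>J. b j powr q) = 0")
  case True
  then have "(\<forall>j\<in>J. a j = 0) \<or> (\<forall>j\<in>J. b j = 0)"
    using assms by (subst (asm) (1 2) sum_nonneg_eq_0_iff) auto
  then have "(\<Sum>j\<in>J. a j * b j) = 0" by auto
  moreover have "0 \<le> (\<Sum>j\<in>J. a j powr p) powr (1/p) * (\<Sum>j\<in>J. b j powr q) powr (1/q)" by simp
  ultimately show ?thesis by simp
next
  case False
  define SA where "SA = (\<Sum>j\<in>J. a j powr p)"
  define SB where "SB = (\<Sum>j\<in>J. b j powr q)"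
  have SA: "0 < SA" using False assms unfolding SA_def by (simp add: sum_nonneg order.not_eq_order_implies_strict)
  have SB: "0 < SB" using False assms unfolding SB_def by (simp add: sum_nonneg order.not_eq_order_implies_strict)
  define A where "A = SA powr (1/p)"
  define B where "B = SB powr (1/q)"
  have A: "0 < A" "A powr p = SA" using SA assms(2) by (auto simp: A_def powr_powr)
  have B: "0 < B" "B powr q = SB" using SB assms(3) by (auto simp: B_def powr_powr)
  have "(a j / A) * (b j / B) \<le> a j powr p / SA / p + b j powr q / SB / q" if "j \<in> J" for j
  proof -
    have "(a j / A) * (b j / B) \<le> (a j / A) powr p / p + (b j / B) powr q / q"
      by (rule Youngs_inequality) (use assms that A B in auto)
    also have "(a j / A) powr p = a j powr p / SA" using A assms that by (simp add: powr_divide)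
    also have "(b j / B) powr q = b j powr q / SB" using B assms that by (simp add: powr_divide)
    finally show ?thesis .
  qed
  then have "(\<Sum>j\<in>J. (a j / A) * (b j / B)) \<le> (\<Sum>j\<in>J. a j powr p / SA / p + b j powr q / SB / q)"
    by (rule sum_mono)
  also have "\<dots> = SA / SA / p + SB / SB / q"
    by (simp add: sum.distrib sum_divide_distrib[symmetric] SA_def SB_def)
  also have "\<dots> = 1" using SA SB assms(4) by simp
  finally have "(\<Sum>j\<in>J. a j * b j) / (A * B) \<le> 1"
    by (simp add: sum_divide_distrib[symmetric] mult.commute mult.left_commute)
  then show ?thesis using A B by (simp add: A_def B_def SA_def SB_def pos_divide_le_eq)
qed

lemma EV_jensen:
  assumes "finite V" "1 \<le> p"
  shows "EV V (\<lambda>A. \<bar>f A\<bar>) \<le> (EV V (\<lambda>A. \<bar>f A\<bar> powr p)) powr (1/p)"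
proof (cases "p = 1")
  case True
  have "0 \<le> EV V (\<lambda>A. \<bar>f A\<bar>)" by (rule EV_nonneg) simp
  then show ?thesis using True by simp
next
  case False
  then have p: "1 < p" using assms by simp
  define q where "q = p / (p - 1)"
  have q: "1 < q" "1/p + 1/q = 1" using p by (auto simp: q_def field_simps)
  define K :: real where "K = 2 ^ card V"
  have K: "0 < K" by (simp add: K_def)
  have cK: "card (Pow V) = K" using assms(1) by (simp add: K_def card_Pow)
  have "(\<Sum>A\<in>Pow V. \<bar>f A\<bar> * 1) \<le> (\<Sum>A\<in>Pow V. \<bar>f A\<bar> powr p) powr (1/p) * (\<Sum>A\<in>Pow V. (1::real) powr q) powr (1/q)"
    by (rule holder_sum) (use assms p q in auto)
  also have "(\<Sum>A\<in>Pow V. (1::real) powr q) = K" using cK by simp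
  finally have h: "(\<Sum>A\<in>Pow V. \<bar>f A\<bar>) \<le> (\<Sum>A\<in>Pow V. \<bar>f A\<bar> powr p) powr (1/p) * K powr (1/q)" by simp
  have "EV V (\<lambda>A. \<bar>f A\<bar>) = (\<Sum>A\<in>Pow V. \<bar>f A\<bar>) / K" by (simp add: EV_def K_def)
  also have "\<dots> \<le> (\<Sum>A\<in>Pow V. \<bar>f A\<bar> powr p) powr (1/p) * (K powr (1/q) / K)"
    using divide_right_mono[OF h, of K] K by simp
  also have "K powr (1/q) / K = 1 / K powr (1/p)"
  proof -
    have "K powr (1/q) * K powr (1/p) = K" using q K by (simp add: powr_add[symmetric] add.commute)
    then show ?thesis using K by (simp add: field_simps)
  qed
  also have "(\<Sum>A\<in>Pow V. \<bar>f A\<bar> powr p) powr (1/p) * (1 / K powr (1/p)) = ((\<Sum>A\<in>Pow V. \<bar>f A\<bar> powr p) / K) powr (1/p)"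
    using K by (simp add: powr_divide sum_nonneg)
  also have "(\<Sum>A\<in>Pow V. \<bar>f A\<bar> powr p) / K = EV V (\<lambda>A. \<bar>f A\<bar> powr p)" by (simp add: EV_def K_def)
  finally show ?thesis by simp
qed

lemma powr_split_nonneg: "0 \<le> (w::real) \<Longrightarrow> 1 < r \<Longrightarrow> w powr r = w * w powr (r - 1)"
proof (cases "w = 0")
  case False
  assume "0 \<le> w" "1 < r"
  have "w powr r = w powr (1 + (r - 1))" by simp
  also have "\<dots> = w * w powr (r - 1)" using False \<open>0 \<le> w\<close> by (simp only: powr_add powr_one)
  finally show ?thesis .
qed simp

lemma minkowski2:
  fixes u v :: "'i \<Rightarrow> real"
  assumes "finite I" "1 \<le> r" "\<forall>i\<in>I. 0 \<le> u i" "\<forall>i\<in>I. 0 \<le> v i"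
  shows "(\<Sum>i\<in>I. (u i + v i) powr r) powr (1/r) \<le> (\<Sum>i\<in>I. u i powr r) powr (1/r) + (\<Sum>i\<in>I. v i powr r) powr (1/r)"
proof (cases "r = 1")
  case True
  then show ?thesis using assms by (simp add: sum.distrib)
next
  case False
  then have r: "1 < r" using assms by simp
  define q where "q = r / (r - 1)"
  have q: "1 < q" "1/r + 1/q = 1" using r by (auto simp: q_def field_simps)
  define S where "S = (\<Sum>i\<in>I. (u i + v i) powr r)"
  define NU where "NU = (\<Sum>i\<in>I. u i powr r) powr (1/r)"
  define NV where "NV = (\<Sum>i\<in>I. v i powr r) powr (1/r)"
  have S0: "0 \<le> S" unfolding S_def by (simp add: sum_nonneg)
  show ?thesis
  proof (cases "S = 0")
    case True
    then show ?thesis unfolding S_def[symmetric] by simp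
  next
    case False
    then have Sp: "0 < S" using S0 by simp
    have e: "((u i + v i) powr (r - 1)) powr q = (u i + v i) powr r" if "i \<in> I" for i
    proof -
      have "(r - 1) * q = r" using r by (simp add: q_def)
      then show ?thesis by (simp add: powr_powr)
    qed
    have "S = (\<Sum>i\<in>I. u i * (u i + v i) powr (r - 1)) + (\<Sum>i\<in>I. v i * (u i + v i) powr (r - 1))"
      unfolding S_def sum.distrib[symmetric] using assms r
      by (intro sum.cong refl) (simp add: powr_split_nonneg distrib_right)
    also have "(\<Sum>i\<in>I. u i * (u i + v i) powr (r - 1)) \<le> NU * (\<Sum>i\<in>I. ((u i + v i) powr (r - 1)) powr q) powr (1/q)"
      unfolding NU_def by (rule holder_sum) (use assms r q in auto)
    also have "(\<Sum>i\<in>I. v i * (u i + v i) powr (r - 1)) \<le> NV * (\<Sum>i\<in>I. ((u i + v i) powr (r - 1)) powr q) powr (1/q)"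
      unfolding NV_def by (rule holder_sum) (use assms r q in auto)
    also have "(\<Sum>i\<in>I. ((u i + v i) powr (r - 1)) powr q) = S" unfolding S_def using e by simp
    finally have "S \<le> (NU + NV) * S powr (1/q)" by (simp add: distrib_right)
    moreover have "S = S powr (1/r) * S powr (1/q)" using q Sp by (simp add: powr_add[symmetric])
    ultimately have "S powr (1/r) * S powr (1/q) \<le> (NU + NV) * S powr (1/q)" by simp
    then have "S powr (1/r) \<le> NU + NV" using Sp by simp
    then show ?thesis unfolding S_def NU_def NV_def .
  qed
qed

lemma minkowski:
  fixes u :: "'j \<Rightarrow> 'i \<Rightarrow> real"
  assumes "finite I" "1 \<le> r" "finite J" "\<forall>j\<in>J. \<forall>i\<in>I. 0 \<le> u j i"
  shows "(\<Sum>i\<in>I. (\<Sum>j\<in>J. u j i) powr r) powr (1/r) \<le> (\<Sum>j\<in>J. (\<Sum>i\<in>I. u j i powr r) powr (1/r))"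
  using assms(3,4)
proof (induction J rule: finite_induct)
  case empty
  then show ?case by simp
next
  case (insert j J)
  have "(\<Sum>i\<in>I. (\<Sum>j'\<in>insert j J. u j' i) powr r) powr (1/r) = (\<Sum>i\<in>I. (u j i + (\<Sum>j'\<in>J. u j' i)) powr r) powr (1/r)"
    using insert by simp
  also have "\<dots> \<le> (\<Sum>i\<in>I. u j i powr r) powr (1/r) + (\<Sum>i\<in>I. (\<Sum>j'\<in>J. u j' i) powr r) powr (1/r)"
    by (rule minkowski2) (use assms insert in \<open>auto intro: sum_nonneg\<close>)
  also have "\<dots> \<le> (\<Sum>i\<in>I. u j i powr r) powr (1/r) + (\<Sum>j'\<in>J. (\<Sum>i\<in>I. u j' i powr r) powr (1/r))"
    using insert by simp
  finally show ?case using insert by simp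
qed

definition finsupp :: "nat \<Rightarrow> (nat \<Rightarrow> real) \<Rightarrow> bool" where
  "finsupp N u \<longleftrightarrow> (\<forall>n\<ge>N. u n = 0)"

lemma finsupp_c0: "finsupp N u \<Longrightarrow> u \<in> c0_space"
  unfolding c0_space_def finsupp_def
  by (intro ballI CollectI tendsto_eventually eventually_sequentiallyI[of N]) auto

lemma finsupp_lq: "finsupp N u \<Longrightarrow> u \<in> lq_space r"
  unfolding lq_space_def finsupp_def
  by (intro CollectI summable_finite[of "{..<N}"]) (auto simp: not_less)

lemma finsupp_X: "finsupp N u \<Longrightarrow> u \<in> X_space q"
  unfolding X_space_def using finsupp_c0 finsupp_lq by auto

lemma finsupp_slot: "finsupp N u \<Longrightarrow> u \<in> slot_space q k"
  unfolding slot_space_def using finsupp_c0 finsupp_X by auto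

lemma finsupp_unit: "j < N \<Longrightarrow> finsupp N (unit_vec j)"
  unfolding finsupp_def unit_vec_def by auto

lemma finsupp_comb: "finsupp N u \<Longrightarrow> finsupp N v \<Longrightarrow> finsupp N (\<lambda>n. a * u n + b * v n)"
  unfolding finsupp_def by auto

lemma finsupp_sum: "(\<forall>j\<in>J. finsupp N (u j)) \<Longrightarrow> finsupp N (\<lambda>n. \<Sum>j\<in>J. c j * u j n)"
  unfolding finsupp_def by auto

lemma lq_norm_finsupp:
  assumes "finsupp N u"
  shows "lq_norm r u = (\<Sum>n<N. \<bar>u n\<bar> powr r) powr (1/r)"
proof -
  have "(\<Sum>n. \<bar>u n\<bar> powr r) = (\<Sum>n<N. \<bar>u n\<bar> powr r)"
    by (rule suminf_finite) (use assms in \<open>auto simp: finsupp_def\<close>)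
  then show ?thesis unfolding lq_norm_def by simp
qed

lemma lq_partial_le:
  assumes "u \<in> lq_space r" "0 < r"
  shows "(\<Sum>n<N. \<bar>u n\<bar> powr r) powr (1/r) \<le> lq_norm r u"
proof -
  have "(\<Sum>n<N. \<bar>u n\<bar> powr r) \<le> (\<Sum>n. \<bar>u n\<bar> powr r)"
    by (rule sum_le_suminf) (use assms in \<open>auto simp: lq_space_def\<close>)
  then show ?thesis unfolding lq_norm_def using assms
    by (intro powr_mono2) (auto intro: sum_nonneg)
qed

lemma c0_bdd: "u \<in> c0_space \<Longrightarrow> bdd_above (range (\<lambda>n. \<bar>u n\<bar>))"
proof -
  assume "u \<in> c0_space"
  then have "Bseq u" unfolding c0_space_def by (intro convergent_imp_Bseq convergentI) simp
  then obtain K where "\<forall>n. norm (u n) \<le> K" using BseqE by metis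
  then show ?thesis by (auto intro!: bdd_aboveI[of _ K])
qed

lemma c0_le_norm: "u \<in> c0_space \<Longrightarrow> \<bar>u n\<bar> \<le> c0_norm u"
  unfolding c0_norm_def by (rule cSUP_upper[OF _ c0_bdd]) auto

lemma c0_norm_le: "(\<And>n. \<bar>u n\<bar> \<le> B) \<Longrightarrow> c0_norm u \<le> B"
  unfolding c0_norm_def by (rule cSUP_least) auto

lemma unit_in_tuples:
  assumes "x \<in> tuples M q" "k < M" "u \<in> slot_space q k"
  shows "x(k := u) \<in> tuples M q"
  using assms unfolding tuples_def by auto

lemma ml_zero:
  assumes "multilinear_form M q T" "x \<in> tuples M q" "k < M"
  shows "T (x(k := (\<lambda>_. 0))) = 0"
proof -
  have z: "(\<lambda>_. 0::real) \<in> slot_space q k" by (rule finsupp_slot[of 0]) (simp add: finsupp_def)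
  have L: "\<And>u v a b. u \<in> slot_space q k \<Longrightarrow> v \<in> slot_space q k \<Longrightarrow>
     T (x(k := (\<lambda>n. a * u n + b * v n))) = a * T (x(k := u)) + b * T (x(k := v))"
    using assms unfolding multilinear_form_def by blast
  have e: "(\<lambda>n::nat. 0 * (0::real) + 0 * 0) = (\<lambda>_. 0)" by simp
  show ?thesis using L[OF z z, of 0 0] unfolding e by simp
qed

lemma ml_sum:
  assumes "multilinear_form M q T" "x \<in> tuples M q" "k < M" "finite J" "\<forall>j\<in>J. finsupp N (u j)"
  shows "T (x(k := (\<lambda>n. \<Sum>j\<in>J. c j * u j n))) = (\<Sum>j\<in>J. c j * T (x(k := u j)))"
  using assms(4,5)
proof (induction J rule: finite_induct)
  case empty
  have e: "(\<lambda>n. \<Sum>j\<in>{}. c j * u j n) = (\<lambda>_. 0::real)" by simp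
  show ?case unfolding e sum.empty by (rule ml_zero[OF assms(1-3)])
next
  case (insert j J)
  have e: "(\<lambda>n. \<Sum>j'\<in>insert j J. c j' * u j' n) = (\<lambda>n. c j * u j n + 1 * (\<Sum>j'\<in>J. c j' * u j' n))"
    using insert by simp
  have s1: "u j \<in> slot_space q k" using insert by (auto intro: finsupp_slot)
  have s2: "(\<lambda>n. \<Sum>j'\<in>J. c j' * u j' n) \<in> slot_space q k"
    by (rule finsupp_slot, rule finsupp_sum) (use insert in auto)
  have L: "\<And>u v a b. u \<in> slot_space q k \<Longrightarrow> v \<in> slot_space q k \<Longrightarrow>
     T (x(k := (\<lambda>n. a * u n + b * v n))) = a * T (x(k := u)) + b * T (x(k := v))"
    using assms unfolding multilinear_form_def by blast
  have IH: "T (x(k := (\<lambda>n. \<Sum>j'\<in>J. c j' * u j' n))) = (\<Sum>j'\<in>J. c j' * T (x(k := u j')))"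
    by (rule insert.IH) (use insert.prems in auto)
  have L1: "T (x(k := (\<lambda>n. c j * u j n + 1 * (\<Sum>j'\<in>J. c j' * u j' n))))
      = c j * T (x(k := u j)) + 1 * T (x(k := (\<lambda>n. \<Sum>j'\<in>J. c j' * u j' n)))"
    by (rule L[OF s1 s2])
  show ?case using L1 unfolding e[symmetric] IH sum.insert[OF insert(1,2)] by (simp only: mult_1_left)
qed

lemma sum_PiE_insert:
  assumes "x \<notin> S"
  shows "(\<Sum>g\<in>PiE (insert x S) B. F g) = (\<Sum>y\<in>B x. \<Sum>g\<in>PiE S B. F (g(x := y)))"
proof -
  have "(\<Sum>g\<in>PiE (insert x S) B. F g) = (\<Sum>(y,g)\<in>B x \<times> PiE S B. F (g(x := y)))"
    using assms
    by (intro sum.reindex_bij_witness[of _ "\<lambda>(y,g). g(x := y)" "\<lambda>g. (g x, g(x := undefined))"])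
       (auto simp: PiE_def extensional_def)
  also have "\<dots> = (\<Sum>y\<in>B x. \<Sum>g\<in>PiE S B. F (g(x := y)))"
    by (subst sum.cartesian_product) auto
  finally show ?thesis .
qed

lemma finsupp_expand:
  assumes "finsupp N u"
  shows "u = (\<lambda>n. \<Sum>n'<N. u n' * unit_vec n' n)"
proof
  fix n
  show "u n = (\<Sum>n'<N. u n' * unit_vec n' n)"
  proof (cases "n < N")
    case True
    then have "(\<Sum>n'<N. u n' * unit_vec n' n) = u n"
      by (subst sum.remove[of _ n]) (auto simp: unit_vec_def)
    then show ?thesis by simp
  next
    case False
    then show ?thesis using assms by (auto simp: finsupp_def unit_vec_def)
  qed
qed

lemma ml_expand_step:
  assumes ml: "multilinear_form M q T" and x: "x \<in> tuples M q"
    and fs: "\<forall>k\<in>{1..<M}. finsupp N (x k)" and s: "s < M"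
  shows "T x = (\<Sum>i\<in>PiE {1..s} (\<lambda>_. {..<N}).
           (\<Prod>k\<in>{1..s}. x k (i k)) * T (\<lambda>k. if k \<in> {1..s} then unit_vec (i k) else x k))"
  using s
proof (induction s)
  case 0
  then show ?case by simp
next
  case (Suc s)
  have IH: "T x = (\<Sum>i\<in>PiE {1..s} (\<lambda>_. {..<N}).
           (\<Prod>k\<in>{1..s}. x k (i k)) * T (\<lambda>k. if k \<in> {1..s} then unit_vec (i k) else x k))"
    using Suc by simp
  have step: "T (\<lambda>k. if k \<in> {1..s} then unit_vec (i k) else x k)
      = (\<Sum>n'<N. x (Suc s) n' * T (\<lambda>k. if k \<in> {1..Suc s} then unit_vec ((i(Suc s := n')) k) else x k))"
    if "i \<in> PiE {1..s} (\<lambda>_. {..<N})" for i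
  proof -
    define y where "y = (\<lambda>k. if k \<in> {1..s} then unit_vec (i k) else x k)"
    have yt: "y \<in> tuples M q"
      using x Suc.prems that unfolding y_def tuples_def
      by (auto intro!: finsupp_slot[of N] finsupp_unit)
    have ys: "y (Suc s := x (Suc s)) = y" unfolding y_def by auto
    have xs: "x (Suc s) = (\<lambda>n. \<Sum>n'<N. x (Suc s) n' * unit_vec n' n)"
      by (rule finsupp_expand) (use fs Suc.prems in auto)
    have "T y = T (y(Suc s := (\<lambda>n. \<Sum>n'<N. x (Suc s) n' * unit_vec n' n)))"
      using ys xs by metis
    also have "\<dots> = (\<Sum>n'<N. x (Suc s) n' * T (y(Suc s := unit_vec n')))"
      by (rule ml_sum[OF ml yt Suc.prems]) (auto intro: finsupp_unit)
    also have "\<dots> = (\<Sum>n'<N. x (Suc s) n' * T (\<lambda>k. if k \<in> {1..Suc s} then unit_vec ((i(Suc s := n')) k) else x k))"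
      by (intro sum.cong refl arg_cong2[where f="(*)"] arg_cong[where f=T]) (auto simp: y_def)
    finally show ?thesis unfolding y_def .
  qed
  have "T x = (\<Sum>i\<in>PiE {1..s} (\<lambda>_. {..<N}). \<Sum>n'<N.
      (\<Prod>k\<in>{1..s}. x k (i k)) * x (Suc s) n' * T (\<lambda>k. if k \<in> {1..Suc s} then unit_vec ((i(Suc s := n')) k) else x k))"
    unfolding IH
  proof (intro sum.cong refl)
    fix i assume "i \<in> PiE {1..s} (\<lambda>_. {..<N})"
    then show "(\<Prod>k\<in>{1..s}. x k (i k)) * T (\<lambda>k. if k \<in> {1..s} then unit_vec (i k) else x k) =
      (\<Sum>n'<N. (\<Prod>k\<in>{1..s}. x k (i k)) * x (Suc s) n' * T (\<lambda>k. if k \<in> {1..Suc s} then unit_vec ((i(Suc s := n')) k) else x k))"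
      by (simp only: step sum_distrib_left mult.assoc)
  qed
  also have "\<dots> = (\<Sum>n'<N. \<Sum>i\<in>PiE {1..s} (\<lambda>_. {..<N}).
      (\<Prod>k\<in>{1..Suc s}. x k ((i(Suc s := n')) k)) * T (\<lambda>k. if k \<in> {1..Suc s} then unit_vec ((i(Suc s := n')) k) else x k))"
  proof (subst sum.swap, intro sum.cong refl)
    fix n' i
    have "(\<Prod>k\<in>{1..Suc s}. x k ((i(Suc s := n')) k)) = x (Suc s) n' * (\<Prod>k\<in>{1..s}. x k ((i(Suc s := n')) k))"
      by (simp add: atLeastAtMostSuc_conv)
    also have "(\<Prod>k\<in>{1..s}. x k ((i(Suc s := n')) k)) = (\<Prod>k\<in>{1..s}. x k (i k))"
      by (intro prod.cong) auto
    finally show "(\<Prod>k\<in>{1..s}. x k (i k)) * x (Suc s) n' * T (\<lambda>k. if k \<in> {1..Suc s} then unit_vec ((i(Suc s := n')) k) else x k) =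
         (\<Prod>k\<in>{1..Suc s}. x k ((i(Suc s := n')) k)) * T (\<lambda>k. if k \<in> {1..Suc s} then unit_vec ((i(Suc s := n')) k) else x k)"
      by simp
  qed
  also have "\<dots> = (\<Sum>i\<in>PiE {1..Suc s} (\<lambda>_. {..<N}).
           (\<Prod>k\<in>{1..Suc s}. x k (i k)) * T (\<lambda>k. if k \<in> {1..Suc s} then unit_vec (i k) else x k))"
  proof -
    have "{1..Suc s} = insert (Suc s) {1..s}" by auto
    then show ?thesis using sum_PiE_insert[of "Suc s" "{1..s}"
       "\<lambda>i. (\<Prod>k\<in>{1..Suc s}. x k (i k)) * T (\<lambda>k. if k \<in> {1..Suc s} then unit_vec (i k) else x k)" "\<lambda>_. {..<N}"] by simp
  qed
  finally show ?case .
qed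

lemma ml_expand:
  assumes ml: "multilinear_form M q T" and x: "x \<in> tuples M q"
    and fs: "\<forall>k\<in>{1..<M}. finsupp N (x k)" and M: "1 \<le> M" and x0: "x 0 = unit_vec j"
  shows "T x = (\<Sum>i\<in>PiE {1..<M} (\<lambda>_. {..<N}). (\<Prod>k\<in>{1..<M}. x k (i k)) * coeff M T j i)"
proof -
  have e: "{1..M - 1} = {1..<M}" using M by auto
  have "T x = (\<Sum>i\<in>PiE {1..M-1} (\<lambda>_. {..<N}).
           (\<Prod>k\<in>{1..M-1}. x k (i k)) * T (\<lambda>k. if k \<in> {1..M-1} then unit_vec (i k) else x k))"
    by (rule ml_expand_step[OF ml x fs]) (use M in simp)
  also have "\<dots> = (\<Sum>i\<in>PiE {1..<M} (\<lambda>_. {..<N}). (\<Prod>k\<in>{1..<M}. x k (i k)) * coeff M T j i)"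
  proof -
    have fe: "(\<lambda>k. if k \<in> {1..<M} then unit_vec (i k) else x k) =
      (\<lambda>k. if k = 0 then unit_vec j else if k < M then unit_vec (i k) else (\<lambda>_. 0))" for i
      using x x0 unfolding tuples_def by auto
    show ?thesis unfolding e coeff_def fe ..
  qed
  finally show ?thesis .
qed

lemma monomial_multilinear:
  fixes T :: "(nat \<Rightarrow> nat \<Rightarrow> real) \<Rightarrow> real" and c :: "'t \<Rightarrow> real"
  assumes "finite \<Phi>" "\<And>x. T x = (\<Sum>\<tau>\<in>\<Phi>. c \<tau> * (\<Prod>k<M. x k (\<iota> \<tau> k)))"
  shows "multilinear_form M q T"
  unfolding multilinear_form_def
proof (intro ballI allI impI)
  fix x :: "nat \<Rightarrow> nat \<Rightarrow> real" and k and u v :: "nat \<Rightarrow> real" and a b :: real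
  assume k: "k < M"
  have pr: "(\<Prod>k'<M. (x(k := w)) k' (\<iota> \<tau> k')) = w (\<iota> \<tau> k) * (\<Prod>k'\<in>{..<M} - {k}. x k' (\<iota> \<tau> k'))" for w :: "nat \<Rightarrow> real" and \<tau>
    using k by (subst prod.remove[of _ k]) (auto intro!: prod.cong)
  show "T (x(k := (\<lambda>n. a * u n + b * v n))) = a * T (x(k := u)) + b * T (x(k := v))"
    unfolding assms(2) pr by (simp add: sum_distrib_left sum.distrib[symmetric] algebra_simps)
qed

definition good :: "nat \<Rightarrow> real \<Rightarrow> bool" where
  "good N x \<longleftrightarrow> 0 \<le> x \<and> x < 1 \<and> (\<forall>z::int. 2^N * x \<noteq> of_int z)"

definition cellidx :: "nat \<Rightarrow> real \<Rightarrow> nat" where "cellidx N x = nat \<lfloor>2^N * x\<rfloor>"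

lemma sin_pi_shift: "sin (pi * (of_int n + f)) = (if even n then 1 else -1) * sin (pi * f)"
proof -
  have "sin (pi * (of_int n + f)) = sin (pi * of_int n + pi * f)" by (simp add: algebra_simps)
  also have "\<dots> = sin (pi * of_int n) * cos (pi * f) + cos (pi * of_int n) * sin (pi * f)" by (rule sin_add)
  also have "\<dots> = (if even n then 1 else -1) * sin (pi * f)" by simp
  finally show ?thesis .
qed

lemma rademacher_floor:
  assumes "\<forall>z::int. 2^l * x \<noteq> of_int z"
  shows "rademacher l x = (if odd \<lfloor>2^l * x\<rfloor> then -1 else 1)"
proof -
  define w where "w = 2^l * x"
  define n where "n = \<lfloor>w\<rfloor>"
  define f where "f = w - of_int n"
  have f0: "0 < f"
  proof -
    have "0 \<le> f" unfolding f_def n_def by simp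
    moreover have "f \<noteq> 0" using assms unfolding f_def n_def w_def by auto
    ultimately show ?thesis by simp
  qed
  have f1: "f < 1" unfolding f_def n_def by linarith
  have sp: "0 < sin (pi * f)" using f0 f1 by (intro sin_gt_zero) auto
  have "rademacher l x = sgn (sin (pi * (of_int n + f)))"
    unfolding rademacher_def f_def w_def by (simp add: algebra_simps)
  also have "\<dots> = (if even n then 1 else -1)" using sp by (simp add: sin_pi_shift sgn_mult)
  finally show ?thesis unfolding n_def w_def by simp
qed

lemma good_noint:
  assumes "good N x" "l \<le> N"
  shows "\<forall>z::int. 2^l * x \<noteq> of_int z"
proof (intro allI notI)
  fix z :: int assume h: "2^l * x = of_int z"
  have "(2::real)^N * x = 2^(N-l) * (2^l * x)"
    using assms(2) by (simp add: power_add[symmetric] mult.assoc[symmetric])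
  also have "\<dots> = of_int (2^(N-l) * z)" using h by simp
  finally show False using assms(1) unfolding good_def by blast
qed

lemma floor_shift:
  assumes "0 \<le> x" "l \<le> N"
  shows "\<lfloor>(2::real)^l * x\<rfloor> = \<lfloor>2^N * x\<rfloor> div 2^(N-l)"
proof -
  have e1: "real_of_int (2^(N-l)) = (2::real)^(N-l)" by simp
  have e2: "(2::real)^N = 2^l * 2^(N-l)" using assms(2) by (simp add: power_add[symmetric])
  have "(2::real)^l * x = 2^N * x / real_of_int (2^(N-l))"
    unfolding e1 e2 by simp
  then show ?thesis using floor_divide_real_eq_div[of "2^(N-l)" "2^N * x"] by simp
qed

lemma rademacher_cell:
  assumes "good N x" "l \<le> N"
  shows "rademacher l x = (if odd (cellidx N x div 2^(N-l)) then -1 else 1)"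
proof -
  have x0: "0 \<le> x" using assms unfolding good_def by simp
  have "rademacher l x = (if odd \<lfloor>2^l * x\<rfloor> then -1 else 1)"
    by (rule rademacher_floor[OF good_noint[OF assms]])
  also have "\<lfloor>(2::real)^l * x\<rfloor> = \<lfloor>2^N * x\<rfloor> div 2^(N-l)" by (rule floor_shift[OF x0 assms(2)])
  also have "\<lfloor>(2::real)^N * x\<rfloor> = int (cellidx N x)" unfolding cellidx_def using x0 by simp
  also have "int (cellidx N x) div 2^(N-l) = int (cellidx N x div 2^(N-l))" by (simp add: zdiv_int)
  finally show ?thesis by simp
qed

lemma bits_eq:
  fixes a b :: nat
  shows "a < 2^N \<Longrightarrow> b < 2^N \<Longrightarrow> (\<forall>j<N. odd (a div 2^j) = odd (b div 2^j)) \<Longrightarrow> a = b"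
proof (induction N arbitrary: a b)
  case 0 then show ?case by simp
next
  case (Suc N)
  have "a div 2 = b div 2"
  proof (rule Suc.IH)
    show "a div 2 < 2^N" "b div 2 < 2^N" using Suc.prems by auto
    show "\<forall>j<N. odd (a div 2 div 2^j) = odd (b div 2 div 2^j)"
      using Suc.prems(3) by (auto simp: div_mult2_eq[symmetric] power_Suc[symmetric] simp del: power_Suc)
  qed
  moreover have "odd a = odd b" using Suc.prems(3)[rule_format, of 0] by simp
  ultimately show ?case by (metis div_mult_mod_eq odd_iff_mod_2_eq_one parity_cases)
qed

interpretation RU: product_sigma_finite "\<lambda>_::nat. restrict_space lborel {0..1::real}"
  by (rule product_sigma_finite.intro, rule sigma_finite_measure_restrict_space[OF lborel.sigma_finite_measure_axioms]) simp

abbreviation PMm :: "nat \<Rightarrow> (nat \<Rightarrow> real) measure" where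
  "PMm m \<equiv> Pi\<^sub>M {1..m} (\<lambda>_. restrict_space lborel {0..1::real})"

definition cell :: "nat \<Rightarrow> nat \<Rightarrow> (nat \<Rightarrow> nat) \<Rightarrow> (nat \<Rightarrow> real) set" where
  "cell N m \<kappa> = PiE {1..m} (\<lambda>k. {real (\<kappa> k) / 2^N ..< (real (\<kappa> k) + 1) / 2^N})"

definition Qset :: "nat \<Rightarrow> nat \<Rightarrow> (nat \<Rightarrow> nat) set" where
  "Qset N m = PiE {1..m} (\<lambda>_. {..<2^N})"

definition Aof :: "nat \<Rightarrow> nat \<Rightarrow> (nat \<Rightarrow> nat) \<Rightarrow> (nat \<times> nat) set" where
  "Aof N m \<kappa> = {(k, l) \<in> {1..m} \<times> {1..N}. odd (\<kappa> k div 2^(N-l))}"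

lemma space_PMm: "space (PMm m) = PiE {1..m} (\<lambda>_. {0..1})"
  by (simp add: space_PiM)

lemma interval_sub:
  assumes "c < (2::nat)^N"
  shows "{real c / 2^N ..< (real c + 1) / 2^N} \<subseteq> {0..1::real}"
proof -
  have "real c + 1 \<le> 2^N" using assms by (metis Suc_leI of_nat_Suc of_nat_le_iff of_nat_numeral of_nat_power add.commute)
  then have h1: "(real c + 1) / 2^N \<le> 1" by simp
  have h0: "0 \<le> real c / 2^N" by simp
  show ?thesis
  proof
    fix x assume "x \<in> {real c / 2^N ..< (real c + 1) / 2^N}"
    then have a: "real c / 2^N \<le> x" and b: "x < (real c + 1) / 2^N" by auto
    show "x \<in> {0..1}" unfolding atLeastAtMost_iff using a b h0 h1 by linarith
  qed
qed

lemma interval_sets: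
  assumes "c < (2::nat)^N"
  shows "{real c / 2^N ..< (real c + 1) / 2^N} \<in> sets (restrict_space lborel {0..1::real})"
  using interval_sub[OF assms] by (subst sets_restrict_space_iff) auto

lemma interval_emeasure:
  assumes "c < (2::nat)^N"
  shows "emeasure (restrict_space lborel {0..1::real}) {real c / 2^N ..< (real c + 1) / 2^N} = ennreal (1 / 2^N)"
proof -
  have "emeasure (restrict_space lborel {0..1::real}) {real c / 2^N ..< (real c + 1) / 2^N}
      = emeasure lborel {real c / 2^N ..< (real c + 1) / 2^N}"
    using interval_sub[OF assms] by (subst emeasure_restrict_space) auto
  also have "\<dots> = ennreal ((real c + 1) / 2^N - real c / 2^N)"
    by (subst emeasure_lborel_Ico) (auto simp: divide_right_mono)
  also have "(real c + 1) / 2^N - real c / 2^N = 1 / 2^N" by (simp add: diff_divide_distrib[symmetric])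
  finally show ?thesis .
qed

lemma cell_sets: "\<kappa> \<in> Qset N m \<Longrightarrow> cell N m \<kappa> \<in> sets (PMm m)"
  unfolding cell_def Qset_def by (intro sets_PiM_I_finite interval_sets) auto

lemma cell_sub: "\<kappa> \<in> Qset N m \<Longrightarrow> cell N m \<kappa> \<subseteq> space (PMm m)"
  unfolding cell_def Qset_def space_PMm using interval_sub by (intro subset_PiE[THEN iffD2]) auto

lemma cell_emeasure: "\<kappa> \<in> Qset N m \<Longrightarrow> emeasure (PMm m) (cell N m \<kappa>) = ennreal ((1 / 2^N)^m)"
proof -
  assume k: "\<kappa> \<in> Qset N m"
  have "emeasure (PMm m) (cell N m \<kappa>) = (\<Prod>k\<in>{1..m}. emeasure (restrict_space lborel {0..1::real}) {real (\<kappa> k) / 2^N ..< (real (\<kappa> k) + 1) / 2^N})"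
    unfolding cell_def using k by (intro RU.emeasure_PiM interval_sets) (auto simp: Qset_def)
  also have "\<dots> = (\<Prod>k\<in>{1..m}. ennreal (1 / 2^N))"
    using k by (intro prod.cong refl interval_emeasure) (auto simp: Qset_def)
  also have "\<dots> = ennreal ((1 / 2^N)^m)" by (simp add: prod_ennreal[symmetric] ennreal_power)
  finally show ?thesis .
qed

lemma cell_measure: "\<kappa> \<in> Qset N m \<Longrightarrow> measure (PMm m) (cell N m \<kappa>) = (1 / 2^N)^m"
  using cell_emeasure[of \<kappa> N m] by (simp add: measure_def)

lemma finite_Qset: "finite (Qset N m)"
  unfolding Qset_def by (intro finite_PiE) auto

lemma cells_integral:
  fixes c :: "(nat \<Rightarrow> nat) \<Rightarrow> real"
  shows "integral\<^sup>L (PMm m) (\<lambda>t. \<Sum>\<kappa>\<in>Qset N m. c \<kappa> * indicator (cell N m \<kappa>) t) = (\<Sum>\<kappa>\<in>Qset N m. c \<kappa> * (1 / 2^N)^m)"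
proof -
  have int: "integrable (PMm m) (\<lambda>t. c \<kappa> * indicator (cell N m \<kappa>) t)" if "\<kappa> \<in> Qset N m" for \<kappa>
  proof -
    have "integrable (PMm m) (indicator (cell N m \<kappa>) :: _ \<Rightarrow> real)"
      by (rule integrable_real_indicator[OF cell_sets[OF that]]) (unfold cell_emeasure[OF that], simp)
    then show ?thesis by simp
  qed
  have "integral\<^sup>L (PMm m) (\<lambda>t. \<Sum>\<kappa>\<in>Qset N m. c \<kappa> * indicator (cell N m \<kappa>) t)
     = (\<Sum>\<kappa>\<in>Qset N m. integral\<^sup>L (PMm m) (\<lambda>t. c \<kappa> * indicator (cell N m \<kappa>) t))"
    by (rule Bochner_Integration.integral_sum[where f = "\<lambda>\<kappa> t. c \<kappa> * (indicator (cell N m \<kappa>) t :: real)"]) (use int in auto)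
  also have "\<dots> = (\<Sum>\<kappa>\<in>Qset N m. c \<kappa> * (1 / 2^N)^m)"
  proof (intro sum.cong refl)
    fix \<kappa> assume k: "\<kappa> \<in> Qset N m"
    have "integral\<^sup>L (PMm m) (indicator (cell N m \<kappa>) :: _ \<Rightarrow> real) = measure (PMm m) (cell N m \<kappa> \<inter> space (PMm m))"
      by (rule Bochner_Integration.integral_indicator)
    also have "cell N m \<kappa> \<inter> space (PMm m) = cell N m \<kappa>" using cell_sub[OF k] by auto
    finally show "integral\<^sup>L (PMm m) (\<lambda>t. c \<kappa> * indicator (cell N m \<kappa>) t) = c \<kappa> * (1 / 2^N)^m"
      using cell_measure[OF k] by simp
  qed
  finally show ?thesis .
qed

lemma ae_good: "AE t in PMm m. \<forall>k\<in>{1..m}. good N (t k)"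
proof (rule AE_finite_allI)
  fix k assume k: "k \<in> {1..m}"
  define B where "B = {x\<in>{0..1::real}. \<not> good N x}"
  have "B \<subseteq> insert 1 (range (\<lambda>z::int. of_int z / 2^N))"
  proof
    fix x assume "x \<in> B"
    then have x: "0 \<le> x" "x \<le> 1" "\<not> good N x" by (auto simp: B_def)
    show "x \<in> insert 1 (range (\<lambda>z::int. of_int z / 2^N))"
    proof (cases "x = 1")
      case False
      then have "x < 1" using x by simp
      then obtain z :: int where "2^N * x = of_int z" using x unfolding good_def by auto
      then have "x = of_int z / 2^N" by (simp add: field_simps)
      then show ?thesis by auto
    qed simp
  qed
  then have cB: "countable B" by (rule countable_subset) simp
  then have Bnull: "B \<in> null_sets lborel" by (rule countable_imp_null_set_lborel)
  have Bsub: "B \<subseteq> {0..1}" by (auto simp: B_def)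
  have Bsets: "B \<in> sets (restrict_space lborel {0..1::real})"
    using Bnull Bsub by (subst sets_restrict_space_iff) auto
  have Bem: "emeasure (restrict_space lborel {0..1::real}) B = 0"
    using Bnull Bsub by (subst emeasure_restrict_space) auto
  define E where "E = PiE {1..m} (\<lambda>k'. if k' = k then B else {0..1::real})"
  have fs: "(if k' = k then B else {0..1::real}) \<in> sets (restrict_space lborel {0..1::real})" for k'
    using Bsets by (auto simp: sets_restrict_space_iff)
  have Esets: "E \<in> sets (PMm m)" unfolding E_def by (intro sets_PiM_I_finite fs) auto
  have "emeasure (PMm m) E = (\<Prod>k'\<in>{1..m}. emeasure (restrict_space lborel {0..1::real}) (if k' = k then B else {0..1}))"
    unfolding E_def by (rule RU.emeasure_PiM) (use Bsets in \<open>auto simp: sets_restrict_space_iff\<close>)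
  also have "\<dots> = 0" using k Bem by (intro prod_zero) auto
  finally have "E \<in> null_sets (PMm m)" using Esets by auto
  then show "AE t in PMm m. good N (t k)"
  proof (rule AE_I')
    show "{t \<in> space (PMm m). \<not> good N (t k)} \<subseteq> E"
    proof
      fix t assume "t \<in> {t \<in> space (PMm m). \<not> good N (t k)}"
      then have te: "t \<in> PiE {1..m} (\<lambda>_. {0..1})" and g: "\<not> good N (t k)" unfolding space_PMm by auto
      have "\<forall>i\<in>{1..m}. t i \<in> (if i = k then B else {0..1})"
        using te g k unfolding PiE_iff B_def by auto
      then show "t \<in> E" unfolding E_def using te by (simp add: PiE_iff)
    qed
  qed
qed simp

lemma cellidx_lt: "good N x \<Longrightarrow> cellidx N x < 2^N"
proof -
  assume g: "good N x"
  then have "(2::real)^N * x < of_int (2^N)" unfolding good_def by simp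
  then have a: "\<lfloor>(2::real)^N * x\<rfloor> < 2^N" by (simp only: floor_less_iff)
  have b: "0 \<le> \<lfloor>(2::real)^N * x\<rfloor>" using g unfolding good_def by simp
  show ?thesis unfolding cellidx_def using a b by (simp add: nat_less_iff)
qed

lemma cell_iff:
  assumes "t \<in> space (PMm m)" "\<forall>k\<in>{1..m}. good N (t k)" "\<kappa> \<in> Qset N m"
  shows "t \<in> cell N m \<kappa> \<longleftrightarrow> \<kappa> = restrict (\<lambda>k. cellidx N (t k)) {1..m}"
proof -
  have ext: "t \<in> extensional {1..m}" using assms(1) unfolding space_PMm by (auto simp: PiE_def)
  have kext: "\<kappa> \<in> extensional {1..m}" using assms(3) unfolding Qset_def by (auto simp: PiE_def)
  have one: "(real (\<kappa> k) / 2^N \<le> t k \<and> t k < (real (\<kappa> k) + 1) / 2^N) \<longleftrightarrow> \<kappa> k = cellidx N (t k)"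
    if k: "k \<in> {1..m}" for k
  proof -
    have t0: "0 \<le> t k" using assms(2) k unfolding good_def by auto
    have "(real (\<kappa> k) / 2^N \<le> t k \<and> t k < (real (\<kappa> k) + 1) / 2^N) \<longleftrightarrow>
          (of_int (int (\<kappa> k)) \<le> 2^N * t k \<and> 2^N * t k < of_int (int (\<kappa> k)) + 1)"
      by (simp add: field_simps)
    also have "\<dots> \<longleftrightarrow> \<lfloor>2^N * t k\<rfloor> = int (\<kappa> k)" by (simp add: floor_eq_iff)
    also have "\<dots> \<longleftrightarrow> \<kappa> k = cellidx N (t k)" unfolding cellidx_def using t0 by auto
    finally show ?thesis .
  qed
  have "t \<in> cell N m \<kappa> \<longleftrightarrow> (\<forall>k\<in>{1..m}. real (\<kappa> k) / 2^N \<le> t k \<and> t k < (real (\<kappa> k) + 1) / 2^N)"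
    unfolding cell_def using ext by (auto simp: PiE_def Pi_def)
  also have "\<dots> \<longleftrightarrow> (\<forall>k\<in>{1..m}. \<kappa> k = cellidx N (t k))" using one by auto
  also have "\<dots> \<longleftrightarrow> \<kappa> = restrict (\<lambda>k. cellidx N (t k)) {1..m}"
    using kext by (auto simp: restrict_def extensional_def fun_eq_iff)
  finally show ?thesis .
qed

lemma kappa_in_Q: "\<forall>k\<in>{1..m}. good N (t k) \<Longrightarrow> restrict (\<lambda>k. cellidx N (t k)) {1..m} \<in> Qset N m"
  unfolding Qset_def using cellidx_lt by auto

lemma cell_sum:
  fixes c :: "(nat \<Rightarrow> nat) \<Rightarrow> real"
  assumes "t \<in> space (PMm m)" "\<forall>k\<in>{1..m}. good N (t k)"
  shows "(\<Sum>\<kappa>\<in>Qset N m. c \<kappa> * indicator (cell N m \<kappa>) t) = c (restrict (\<lambda>k. cellidx N (t k)) {1..m})"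
proof -
  have "(\<Sum>\<kappa>\<in>Qset N m. c \<kappa> * indicator (cell N m \<kappa>) t)
      = (\<Sum>\<kappa>\<in>Qset N m. if \<kappa> = restrict (\<lambda>k. cellidx N (t k)) {1..m} then c \<kappa> else 0)"
    using cell_iff[OF assms] by (intro sum.cong refl) (auto simp: indicator_def)
  also have "\<dots> = c (restrict (\<lambda>k. cellidx N (t k)) {1..m})"
    using kappa_in_Q[OF assms(2)] finite_Qset by (simp add: sum.delta')
  finally show ?thesis .
qed

lemma Aof_restrict: "Aof N m (restrict \<kappa> {1..m}) = Aof N m \<kappa>"
  unfolding Aof_def by auto

lemma Aof_bij: "bij_betw (Aof N m) (Qset N m) (Pow ({1..m} \<times> {1..N}))"
proof -
  have inj: "inj_on (Aof N m) (Qset N m)"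
  proof (rule inj_onI)
    fix \<kappa> \<kappa>' assume k: "\<kappa> \<in> Qset N m" "\<kappa>' \<in> Qset N m" and eq: "Aof N m \<kappa> = Aof N m \<kappa>'"
    show "\<kappa> = \<kappa>'"
    proof (rule PiE_ext[OF k[unfolded Qset_def]])
      fix k assume kk: "k \<in> {1..m}"
      show "\<kappa> k = \<kappa>' k"
      proof (rule bits_eq[of _ N])
        show "\<kappa> k < 2^N" "\<kappa>' k < 2^N" using k kk by (auto simp: Qset_def)
        show "\<forall>j<N. odd (\<kappa> k div 2^j) = odd (\<kappa>' k div 2^j)"
        proof (intro allI impI)
          fix j assume j: "j < N"
          have "(k, N - j) \<in> Aof N m \<kappa> \<longleftrightarrow> (k, N - j) \<in> Aof N m \<kappa>'" using eq by simp
          moreover have "N - (N - j) = j" using j by simp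
          ultimately show "odd (\<kappa> k div 2^j) = odd (\<kappa>' k div 2^j)" using kk j unfolding Aof_def by auto
        qed
      qed
    qed
  qed
  have sub: "Aof N m ` Qset N m \<subseteq> Pow ({1..m} \<times> {1..N})" unfolding Aof_def by auto
  have "card (Aof N m ` Qset N m) = card (Qset N m)" by (rule card_image[OF inj])
  also have "\<dots> = (2^N)^m" unfolding Qset_def by (simp add: card_PiE)
  also have "\<dots> = card (Pow ({1..m} \<times> {1..N}))" by (simp add: card_Pow card_cartesian_product power_mult[symmetric] mult.commute)
  finally have "Aof N m ` Qset N m = Pow ({1..m} \<times> {1..N})"
    by (intro card_subset_eq sub) auto
  then show ?thesis using inj unfolding bij_betw_def by simp
qed

lemma bridge:
  fixes F :: "(nat \<Rightarrow> real) \<Rightarrow> real" and G :: "(nat \<times> nat) set \<Rightarrow> real"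
  assumes Fm: "F \<in> borel_measurable (PMm m)"
    and FG: "\<And>t. t \<in> space (PMm m) \<Longrightarrow> (\<forall>k\<in>{1..m}. good N (t k)) \<Longrightarrow> F t = G (Aof N m (\<lambda>k. cellidx N (t k)))"
  shows "integral\<^sup>L (PMm m) F = EV ({1..m} \<times> {1..N}) G"
proof -
  define c where "c \<kappa> = G (Aof N m \<kappa>)" for \<kappa>
  have gm: "(\<lambda>t. \<Sum>\<kappa>\<in>Qset N m. c \<kappa> * indicator (cell N m \<kappa>) t) \<in> borel_measurable (PMm m)"
    by (intro borel_measurable_sum borel_measurable_times borel_measurable_const borel_measurable_indicator cell_sets)
  have ae: "AE t in PMm m. F t = (\<Sum>\<kappa>\<in>Qset N m. c \<kappa> * indicator (cell N m \<kappa>) t)"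
    using ae_good[of m N]
  proof (rule AE_mp[OF _ AE_I2])
    fix t assume t: "t \<in> space (PMm m)"
    show "(\<forall>k\<in>{1..m}. good N (t k)) \<longrightarrow> F t = (\<Sum>\<kappa>\<in>Qset N m. c \<kappa> * indicator (cell N m \<kappa>) t)"
      using FG[OF t] cell_sum[OF t, of N c] Aof_restrict[of N m "\<lambda>k. cellidx N (t k)"] unfolding c_def by auto
  qed
  have "integral\<^sup>L (PMm m) F = integral\<^sup>L (PMm m) (\<lambda>t. \<Sum>\<kappa>\<in>Qset N m. c \<kappa> * indicator (cell N m \<kappa>) t)"
    by (rule integral_cong_AE[OF Fm gm ae])
  also have "\<dots> = (\<Sum>\<kappa>\<in>Qset N m. c \<kappa> * (1 / 2^N)^m)" by (rule cells_integral)
  also have "\<dots> = (\<Sum>A\<in>Pow ({1..m} \<times> {1..N}). G A) * (1 / 2^N)^m"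
    unfolding c_def sum_distrib_right[symmetric] using sum.reindex_bij_betw[OF Aof_bij, of G] by simp
  also have "\<dots> = EV ({1..m} \<times> {1..N}) G"
  proof -
    have e: "((1::real) / 2^N)^m = 1 / 2^(N*m)" by (simp add: power_divide power_mult)
    show ?thesis unfolding EV_def e by (simp add: card_cartesian_product mult.commute)
  qed
  finally show ?thesis .
qed

definition Sset :: "nat \<Rightarrow> (nat \<Rightarrow> nat) \<Rightarrow> (nat \<times> nat) set" where
  "Sset m i = (\<lambda>k. (k, i k)) ` {1..m}"

lemma chi_Sset: "chi (Sset m i) A = (\<Prod>k\<in>{1..m}. sg A (k, i k))"
  unfolding chi_def Sset_def by (subst prod.reindex) (auto simp: inj_on_def)

lemma rademacher_meas[measurable]: "rademacher j \<in> borel_measurable borel"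
  unfolding rademacher_def by measurable

lemma rad_integrand_meas:
  "(\<lambda>t. \<bar>\<Sum>i\<in>({1..m} \<rightarrow>\<^sub>E {1..N}). (\<Prod>k\<in>{1..m}. rademacher (i k) (t k)) * y i\<bar> powr p)
     \<in> borel_measurable (PMm m)"
proof -
  have c: "(\<lambda>t. t k) \<in> borel_measurable (PMm m)" if "k \<in> {1..m}" for k
  proof -
    have "(\<lambda>t. t k) \<in> measurable (PMm m) (restrict_space lborel {0..1::real})"
      using that by (rule measurable_component_singleton)
    moreover have "(\<lambda>x. x) \<in> measurable (restrict_space lborel {0..1::real}) borel"
      by (intro measurable_restrict_space1) simp
    ultimately have "(\<lambda>x. x) \<circ> (\<lambda>t. t k) \<in> borel_measurable (PMm m)" by (rule measurable_comp)
    then show ?thesis by (simp add: comp_def)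
  qed
  have r: "(\<lambda>t. rademacher j (t k)) \<in> borel_measurable (PMm m)" if "k \<in> {1..m}" for k j
    using measurable_comp[OF c[OF that] rademacher_meas] by (simp add: comp_def)
  show ?thesis
    by (intro measurable_abs_powr borel_measurable_sum borel_measurable_times
        borel_measurable_prod borel_measurable_const r measurable_const) auto
qed

lemma rad_bridge:
  "integral\<^sup>L (PMm m) (\<lambda>t. \<bar>\<Sum>i\<in>({1..m} \<rightarrow>\<^sub>E {1..N}). (\<Prod>k\<in>{1..m}. rademacher (i k) (t k)) * y i\<bar> powr p)
   = EV ({1..m} \<times> {1..N}) (\<lambda>A. \<bar>\<Sum>i\<in>({1..m} \<rightarrow>\<^sub>E {1..N}). y i * chi (Sset m i) A\<bar> powr p)"
proof (rule bridge[OF rad_integrand_meas])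
  fix t assume t: "t \<in> space (PMm m)" and g: "\<forall>k\<in>{1..m}. good N (t k)"
  have "(\<Prod>k\<in>{1..m}. rademacher (i k) (t k)) = chi (Sset m i) (Aof N m (\<lambda>k. cellidx N (t k)))"
    if i: "i \<in> {1..m} \<rightarrow>\<^sub>E {1..N}" for i
    unfolding chi_Sset
  proof (intro prod.cong refl)
    fix k assume k: "k \<in> {1..m}"
    have ik: "i k \<in> {1..N}" using i k by auto
    show "rademacher (i k) (t k) = sg (Aof N m (\<lambda>k. cellidx N (t k))) (k, i k)"
      using rademacher_cell[of N "t k" "i k"] g k ik unfolding sg_def Aof_def by auto
  qed
  then show "\<bar>\<Sum>i\<in>({1..m} \<rightarrow>\<^sub>E {1..N}). (\<Prod>k\<in>{1..m}. rademacher (i k) (t k)) * y i\<bar> powr p =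
    \<bar>\<Sum>i\<in>({1..m} \<rightarrow>\<^sub>E {1..N}). y i * chi (Sset m i) (Aof N m (\<lambda>k. cellidx N (t k)))\<bar> powr p"
    by (simp add: mult.commute)
qed

lemma powr_convex_ineq:
  fixes a b l p :: real
  assumes "1 \<le> p" "0 \<le> a" "0 \<le> b" "0 \<le> l" "l \<le> 1"
  shows "(l * a + (1 - l) * b) powr p \<le> l * a powr p + (1 - l) * b powr p"
proof (cases "a = 0 \<or> b = 0")
  case True
  have aux: "(c * x) powr p \<le> c * x powr p" if "0 \<le> c" "c \<le> 1" "0 \<le> x" for c x :: real
  proof -
    have "(c * x) powr p = c powr p * x powr p" using that by (simp add: powr_mult)
    also have "c powr p \<le> c" using that assms(1) by (cases "c = 0") (auto intro: powr_le_one_le)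
    finally show ?thesis using that by (simp add: mult_right_mono)
  qed
  show ?thesis
  proof (cases "a = 0")
    case True
    then show ?thesis using aux[of "1 - l" b] assms by simp
  next
    case False
    then have "b = 0" using \<open>a = 0 \<or> b = 0\<close> by simp
    then show ?thesis using aux[of l a] assms by simp
  qed
next
  case False
  then have ab: "a \<in> {0<..}" "b \<in> {0<..}" using assms by auto
  have "((1 - l) *\<^sub>R b + l *\<^sub>R a) powr p \<le> (1 - l) * b powr p + l * a powr p"
    by (rule convex_onD[OF powr_convex[OF assms(1)]]) (use assms ab in auto)
  then show ?thesis by (simp add: add.commute)
qed

lemma abs_powr_convex:
  fixes x y l p :: real
  assumes "1 \<le> p" "0 \<le> l" "l \<le> 1"
  shows "\<bar>l * x + (1 - l) * y\<bar> powr p \<le> l * \<bar>x\<bar> powr p + (1 - l) * \<bar>y\<bar> powr p"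
proof -
  have "\<bar>l * x + (1 - l) * y\<bar> \<le> l * \<bar>x\<bar> + (1 - l) * \<bar>y\<bar>"
    using assms by (metis abs_mult abs_of_nonneg abs_triangle_ineq diff_ge_0_iff_ge)
  then have "\<bar>l * x + (1 - l) * y\<bar> powr p \<le> (l * \<bar>x\<bar> + (1 - l) * \<bar>y\<bar>) powr p"
    using assms by (intro powr_mono2) auto
  also have "\<dots> \<le> l * \<bar>x\<bar> powr p + (1 - l) * \<bar>y\<bar> powr p"
    by (rule powr_convex_ineq) (use assms in auto)
  finally show ?thesis .
qed

definition Gz :: "nat \<Rightarrow> nat \<Rightarrow> ((nat \<Rightarrow> nat) \<Rightarrow> real) \<Rightarrow> (nat \<times> nat \<Rightarrow> real) \<Rightarrow> (nat \<times> nat) set \<Rightarrow> real" where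
  "Gz m N y zz A = (\<Sum>i\<in>{1..m} \<rightarrow>\<^sub>E {1..N}. y i * (\<Prod>k\<in>{1..m}. zz (k, i k) * sg A (k, i k)))"

lemma Gz_one: "Gz m N y (\<lambda>_. 1) A = (\<Sum>i\<in>{1..m} \<rightarrow>\<^sub>E {1..N}. y i * chi (Sset m i) A)"
  by (simp add: Gz_def chi_Sset)

lemma sg_symdiff: "sg ((A - E) \<union> (E - A)) v = sg A v * sg E v"
  unfolding sg_def by auto

lemma Gz_flip:
  assumes "\<forall>v\<in>{1..m} \<times> {1..N}. zz v = 1 \<or> zz v = -1"
  shows "Gz m N y zz A = Gz m N y (\<lambda>_. 1) ((A - {v\<in>{1..m} \<times> {1..N}. zz v = -1}) \<union> ({v\<in>{1..m} \<times> {1..N}. zz v = -1} - A))"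
proof -
  define E where "E = {v\<in>{1..m} \<times> {1..N}. zz v = -1}"
  have pt: "zz (k, i k) * sg A (k, i k) = sg ((A - E) \<union> (E - A)) (k, i k)"
    if i: "i \<in> {1..m} \<rightarrow>\<^sub>E {1..N}" and k: "k \<in> {1..m}" for i k
  proof -
    have v: "(k, i k) \<in> {1..m} \<times> {1..N}" using i k by auto
    have "zz (k, i k) = 1 \<or> zz (k, i k) = -1" using assms v by blast
    then show ?thesis unfolding sg_symdiff using v by (auto simp: sg_def E_def)
  qed
  have "Gz m N y zz A = Gz m N y (\<lambda>_. 1) ((A - E) \<union> (E - A))"
    unfolding Gz_def by (auto intro!: sum.cong prod.cong simp: pt)
  then show ?thesis unfolding E_def .
qed

lemma prod_affine:
  fixes zz :: "nat \<times> nat \<Rightarrow> real"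
  assumes "finite K"
  shows "(\<Prod>k\<in>K. zz (k, i k) * sg A (k, i k)) =
    (1 + zz u) / 2 * (\<Prod>k\<in>K. (zz(u := 1)) (k, i k) * sg A (k, i k)) +
    (1 - zz u) / 2 * (\<Prod>k\<in>K. (zz(u := -1)) (k, i k) * sg A (k, i k))"
proof (cases "\<exists>k0\<in>K. (k0, i k0) = u")
  case True
  then obtain k0 where k0: "k0 \<in> K" "(k0, i k0) = u" by blast
  define R where "R = (\<Prod>k\<in>K - {k0}. zz (k, i k) * sg A (k, i k))"
  have same: "(\<Prod>k\<in>K - {k0}. (zz(u := t)) (k, i k) * sg A (k, i k)) = R" for t
    unfolding R_def using k0 by (intro prod.cong refl) auto
  have split: "(\<Prod>k\<in>K. zz' (k, i k) * sg A (k, i k)) = zz' u * sg A u * (\<Prod>k\<in>K - {k0}. zz' (k, i k) * sg A (k, i k))" for zz'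
    using k0 assms by (subst prod.remove[of _ k0]) auto
  show ?thesis unfolding split same using R_def by (simp add: field_simps)
next
  case False
  have same: "(\<Prod>k\<in>K. (zz(u := t)) (k, i k) * sg A (k, i k)) = (\<Prod>k\<in>K. zz (k, i k) * sg A (k, i k))" for t
    using False by (intro prod.cong refl) auto
  show ?thesis unfolding same by (simp add: field_simps)
qed

lemma Gz_affine:
  "Gz m N y zz A = (1 + zz u) / 2 * Gz m N y (zz(u := 1)) A + (1 - zz u) / 2 * Gz m N y (zz(u := -1)) A"
  unfolding Gz_def
  by (subst prod_affine[of "{1..m}" zz _ A u]) (simp_all add: sum_distrib_left sum.distrib[symmetric] algebra_simps)

lemma contraction:
  assumes p: "1 \<le> p"
  shows "finite U \<Longrightarrow> U \<subseteq> {1..m} \<times> {1..N} \<Longrightarrow> (\<forall>v\<in>{1..m} \<times> {1..N}. \<bar>zz v\<bar> \<le> 1) \<Longrightarrow>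
    (\<forall>v\<in>{1..m} \<times> {1..N} - U. zz v = 1 \<or> zz v = -1) \<Longrightarrow>
    EV ({1..m} \<times> {1..N}) (\<lambda>A. \<bar>Gz m N y zz A\<bar> powr p) \<le> EV ({1..m} \<times> {1..N}) (\<lambda>A. \<bar>Gz m N y (\<lambda>_. 1) A\<bar> powr p)"
proof (induction U arbitrary: zz rule: finite_induct)
  case empty
  define E where "E = {v\<in>{1..m} \<times> {1..N}. zz v = -1}"
  have "EV ({1..m} \<times> {1..N}) (\<lambda>A. \<bar>Gz m N y zz A\<bar> powr p)
      = EV ({1..m} \<times> {1..N}) (\<lambda>A. \<bar>Gz m N y (\<lambda>_. 1) ((A - E) \<union> (E - A))\<bar> powr p)"
    unfolding E_def using Gz_flip[of m N zz y] empty.prems by simp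
  also have "\<dots> = EV ({1..m} \<times> {1..N}) (\<lambda>A. \<bar>Gz m N y (\<lambda>_. 1) A\<bar> powr p)"
    by (rule EV_symdiff[of E _ "\<lambda>A. \<bar>Gz m N y (\<lambda>_. 1) A\<bar> powr p"]) (auto simp: E_def)
  finally show ?case by simp
next
  case (insert u U)
  define l where "l = (1 + zz u) / 2"
  have u: "u \<in> {1..m} \<times> {1..N}" using insert by auto
  have zu: "\<bar>zz u\<bar> \<le> 1" using insert.prems(2) u by blast
  have l: "0 \<le> l" "l \<le> 1" using zu unfolding l_def by (auto simp: abs_le_iff)
  have l1: "1 - l = (1 - zz u) / 2" unfolding l_def by (simp add: field_simps)
  have IHp: "EV ({1..m} \<times> {1..N}) (\<lambda>A. \<bar>Gz m N y (zz(u := t)) A\<bar> powr p) \<le> EV ({1..m} \<times> {1..N}) (\<lambda>A. \<bar>Gz m N y (\<lambda>_. 1) A\<bar> powr p)"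
    if "t = 1 \<or> t = -1" for t
    by (rule insert.IH) (use insert.prems that in auto)
  have pw: "\<bar>Gz m N y zz A\<bar> powr p \<le> l * \<bar>Gz m N y (zz(u := 1)) A\<bar> powr p + (1 - l) * \<bar>Gz m N y (zz(u := -1)) A\<bar> powr p" for A
  proof -
    have "Gz m N y zz A = l * Gz m N y (zz(u := 1)) A + (1 - l) * Gz m N y (zz(u := -1)) A"
      unfolding l1 unfolding l_def by (rule Gz_affine)
    then show ?thesis using abs_powr_convex[OF p l] by simp
  qed
  have "EV ({1..m} \<times> {1..N}) (\<lambda>A. \<bar>Gz m N y zz A\<bar> powr p) \<le>
     EV ({1..m} \<times> {1..N}) (\<lambda>A. l * \<bar>Gz m N y (zz(u := 1)) A\<bar> powr p + (1 - l) * \<bar>Gz m N y (zz(u := -1)) A\<bar> powr p)"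
    by (rule EV_mono) (rule pw)
  also have "\<dots> = l * EV ({1..m} \<times> {1..N}) (\<lambda>A. \<bar>Gz m N y (zz(u := 1)) A\<bar> powr p) + (1 - l) * EV ({1..m} \<times> {1..N}) (\<lambda>A. \<bar>Gz m N y (zz(u := -1)) A\<bar> powr p)"
    by (simp add: EV_add EV_cmult)
  also have "\<dots> \<le> l * EV ({1..m} \<times> {1..N}) (\<lambda>A. \<bar>Gz m N y (\<lambda>_. 1) A\<bar> powr p) + (1 - l) * EV ({1..m} \<times> {1..N}) (\<lambda>A. \<bar>Gz m N y (\<lambda>_. 1) A\<bar> powr p)"
    using IHp[of 1] IHp[of "-1"] l by (intro add_mono mult_left_mono) auto
  also have "\<dots> = EV ({1..m} \<times> {1..N}) (\<lambda>A. \<bar>Gz m N y (\<lambda>_. 1) A\<bar> powr p)" by (simp add: algebra_simps)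
  finally show ?case .
qed

lemma conj_exp_conj: "1 \<le> p \<Longrightarrow> conj_exp (conj_ereal p) = p"
  unfolding conj_exp_def conj_ereal_def by (auto simp: field_simps)

lemma conj_inf: "conj_ereal 1 = \<infinity>" unfolding conj_ereal_def by simp

lemma conj_fin: "1 < p \<Longrightarrow> conj_ereal p = ereal (p / (p - 1)) \<and> conj_ereal p \<noteq> \<infinity>"
  unfolding conj_ereal_def by auto

lemma unit_tuple_slot:
  assumes "x \<in> unit_tuples M q" "1 \<le> k" "k < M"
  shows "x k \<in> c0_space" "\<bar>x k n\<bar> \<le> 1"
proof -
  have "x k \<in> slot_space q k" "slot_norm q k (x k) \<le> 1" using assms unfolding unit_tuples_def tuples_def by auto
  then have a: "x k \<in> c0_space" and b: "c0_norm (x k) \<le> 1" using assms(2) unfolding slot_space_def slot_norm_def by auto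
  show "x k \<in> c0_space" by (rule a)
  show "\<bar>x k n\<bar> \<le> 1" using c0_le_norm[OF a, of n] b by linarith
qed

lemma unit_tuple_slot0_inf:
  assumes "x \<in> unit_tuples M \<infinity>" "0 < M"
  shows "\<bar>x 0 n\<bar> \<le> 1"
proof -
  have "x 0 \<in> slot_space \<infinity> 0" "slot_norm \<infinity> 0 (x 0) \<le> 1" using assms unfolding unit_tuples_def tuples_def by auto
  then have a: "x 0 \<in> c0_space" and b: "c0_norm (x 0) \<le> 1"
    unfolding slot_space_def slot_norm_def X_space_def X_norm_def by auto
  show ?thesis using c0_le_norm[OF a, of n] b by linarith
qed

lemma unit_tuple_slot0_fin:
  assumes "x \<in> unit_tuples M (ereal r)" "0 < M"
  shows "x 0 \<in> lq_space r" "lq_norm r (x 0) \<le> 1"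
proof -
  have "x 0 \<in> slot_space (ereal r) 0" "slot_norm (ereal r) 0 (x 0) \<le> 1" using assms unfolding unit_tuples_def tuples_def by auto
  then show "x 0 \<in> lq_space r" "lq_norm r (x 0) \<le> 1"
    unfolding slot_space_def slot_norm_def X_space_def X_norm_def by auto
qed

lemma zero_unit_tuple: "(\<lambda>k. (\<lambda>_. 0::real)) \<in> unit_tuples M q"
proof -
  have fs: "finsupp 0 (\<lambda>_. 0::real)" by (simp add: finsupp_def)
  have c0: "c0_norm (\<lambda>_. 0::real) \<le> 1" by (rule c0_norm_le) simp
  have lq: "lq_norm r (\<lambda>_. 0::real) \<le> 1" for r by (simp add: lq_norm_finsupp[OF fs])
  show ?thesis unfolding unit_tuples_def tuples_def
    using finsupp_slot[OF fs] c0 lq by (auto simp: slot_norm_def X_norm_def)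
qed

lemma unit_tuples_ne: "unit_tuples M q \<noteq> {}" using zero_unit_tuple by blast

lemma prod_ind:
  assumes "finite S"
  shows "(\<Prod>k\<in>S. if P k then (1::real) else 0) = (if \<forall>k\<in>S. P k then 1 else 0)"
proof (cases "\<forall>k\<in>S. P k")
  case True then show ?thesis by simp
next
  case False then show ?thesis using assms by (auto intro: prod_zero)
qed

definition T1 :: "real \<Rightarrow> nat \<Rightarrow> nat \<Rightarrow> ((nat \<Rightarrow> nat) \<Rightarrow> real) \<Rightarrow> (nat \<Rightarrow> (nat \<times> nat) set) \<Rightarrow> nat \<Rightarrow> (nat \<Rightarrow> nat \<Rightarrow> real) \<Rightarrow> real" where
  "T1 p m N y e K x = (\<Sum>\<tau>\<in>{..<K} \<times> ({1..m} \<rightarrow>\<^sub>E {1..N}).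
     ((1 / real K) powr (1/p) * y (snd \<tau>) * chi (Sset m (snd \<tau>)) (e (fst \<tau>))) *
     (\<Prod>k<Suc m. x k (if k = 0 then fst \<tau> else snd \<tau> k)))"

lemma finite_Phi: "finite ({..<K::nat} \<times> ({1..m::nat} \<rightarrow>\<^sub>E {1..N::nat}))"
  by (intro finite_cartesian_product finite_PiE) auto

lemma T1_ml: "multilinear_form (Suc m) q (T1 p m N y e K)"
  by (rule monomial_multilinear[where \<Phi> = "{..<K} \<times> ({1..m} \<rightarrow>\<^sub>E {1..N})"
     and c = "\<lambda>\<tau>. (1 / real K) powr (1/p) * y (snd \<tau>) * chi (Sset m (snd \<tau>)) (e (fst \<tau>))"
     and \<iota> = "\<lambda>\<tau> k. if k = 0 then fst \<tau> else snd \<tau> k", OF finite_Phi]) (simp add: T1_def)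

lemma prod_Suc_split: "(\<Prod>k<Suc m. f k) = f 0 * (\<Prod>k\<in>{1..m}. f k)"
proof -
  have "{..<Suc m} = insert 0 {1..m}" by auto
  then show ?thesis by simp
qed

lemma T1_formula:
  "T1 p m N y e K x = (\<Sum>j<K. x 0 j * ((1 / real K) powr (1/p) * Gz m N y (\<lambda>v. x (fst v) (snd v)) (e j)))"
proof -
  have "T1 p m N y e K x = (\<Sum>j<K. \<Sum>i\<in>{1..m} \<rightarrow>\<^sub>E {1..N}.
     ((1 / real K) powr (1/p) * y i * chi (Sset m i) (e j)) * (x 0 j * (\<Prod>k\<in>{1..m}. x k (i k))))"
  proof -
    have "T1 p m N y e K x = (\<Sum>(j,i)\<in>{..<K} \<times> ({1..m} \<rightarrow>\<^sub>E {1..N}).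
     ((1 / real K) powr (1/p) * y i * chi (Sset m i) (e j)) * (x 0 j * (\<Prod>k\<in>{1..m}. x k (i k))))"
      unfolding T1_def prod_Suc_split by (intro sum.cong refl) (auto simp: split_beta intro!: prod.cong)
    then show ?thesis by (simp add: sum.cartesian_product)
  qed
  also have "\<dots> = (\<Sum>j<K. x 0 j * ((1 / real K) powr (1/p) * Gz m N y (\<lambda>v. x (fst v) (snd v)) (e j)))"
  proof (intro sum.cong refl)
    fix j
    have "Gz m N y (\<lambda>v. x (fst v) (snd v)) (e j) = (\<Sum>i\<in>{1..m} \<rightarrow>\<^sub>E {1..N}. y i * ((\<Prod>k\<in>{1..m}. x k (i k)) * chi (Sset m i) (e j)))"
      unfolding Gz_def chi_Sset by (simp add: prod.distrib)
    then show "(\<Sum>i\<in>{1..m} \<rightarrow>\<^sub>E {1..N}. ((1 / real K) powr (1/p) * y i * chi (Sset m i) (e j)) * (x 0 j * (\<Prod>k\<in>{1..m}. x k (i k))))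
       = x 0 j * ((1 / real K) powr (1/p) * Gz m N y (\<lambda>v. x (fst v) (snd v)) (e j))"
      by (simp add: sum_distrib_left algebra_simps)
  qed
  finally show ?thesis .
qed

lemma T1_coeff:
  assumes "i' \<in> {1..m} \<rightarrow>\<^sub>E {..<N'}"
  shows "coeff (Suc m) (T1 p m N y e K) j' i' =
    (if j' < K \<and> i' \<in> {1..m} \<rightarrow>\<^sub>E {1..N} then (1 / real K) powr (1/p) * y i' * chi (Sset m i') (e j') else 0)"
proof -
  define X where "X = (\<lambda>k. if k = 0 then unit_vec j' else if k < Suc m then unit_vec (i' k) else (\<lambda>_. 0::real))"
  have pr: "(\<Prod>k<Suc m. X k (if k = 0 then fst \<tau> else snd \<tau> k)) = (if \<tau> = (j', i') then 1 else 0)"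
    if t: "\<tau> \<in> {..<K} \<times> ({1..m} \<rightarrow>\<^sub>E {1..N})" for \<tau>
  proof -
    obtain j i where ji: "\<tau> = (j, i)" by fastforce
    have i: "i \<in> {1..m} \<rightarrow>\<^sub>E {1..N}" using t ji by auto
    have "(\<Prod>k<Suc m. X k (if k = 0 then fst \<tau> else snd \<tau> k)) =
       (if j' = j then 1 else 0) * (\<Prod>k\<in>{1..m}. if i' k = i k then 1 else 0)"
      unfolding prod_Suc_split ji X_def by (auto simp: unit_vec_def intro!: prod.cong)
    also have "\<dots> = (if j' = j \<and> (\<forall>k\<in>{1..m}. i' k = i k) then 1 else 0)" by (simp add: prod_ind)
    also have "(\<forall>k\<in>{1..m}. i' k = i k) \<longleftrightarrow> i' = i"
      using assms i by (auto simp: PiE_def extensional_def fun_eq_iff)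
    finally show ?thesis using ji by auto
  qed
  have "coeff (Suc m) (T1 p m N y e K) j' i' = T1 p m N y e K X"
    unfolding coeff_def X_def by simp
  also have "\<dots> = (\<Sum>\<tau>\<in>{..<K} \<times> ({1..m} \<rightarrow>\<^sub>E {1..N}).
     ((1 / real K) powr (1/p) * y (snd \<tau>) * chi (Sset m (snd \<tau>)) (e (fst \<tau>))) * (if \<tau> = (j', i') then 1 else 0))"
    unfolding T1_def using pr by (intro sum.cong refl) simp
  also have "\<dots> = (\<Sum>\<tau>\<in>{..<K} \<times> ({1..m} \<rightarrow>\<^sub>E {1..N}).
     if \<tau> = (j', i') then (1 / real K) powr (1/p) * y i' * chi (Sset m i') (e j') else 0)"
    by (intro sum.cong refl) auto
  also have "\<dots> = (if (j', i') \<in> {..<K} \<times> ({1..m} \<rightarrow>\<^sub>E {1..N}) then (1 / real K) powr (1/p) * y i' * chi (Sset m i') (e j') else 0)"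
    by (rule sum.delta[OF finite_Phi])
  also have "\<dots> = (if j' < K \<and> i' \<in> {1..m} \<rightarrow>\<^sub>E {1..N} then (1 / real K) powr (1/p) * y i' * chi (Sset m i') (e j') else 0)"
    by simp
  finally show ?thesis .
qed

lemma bij_card_K:
  assumes "bij_betw e {..<K} (Pow V)" "finite V"
  shows "real K = 2 ^ card V" "0 < K"
proof -
  have "card {..<K} = card (Pow V)" by (rule bij_betw_same_card[OF assms(1)])
  then have "K = 2 ^ card V" using assms(2) by (simp add: card_Pow)
  then show "real K = 2 ^ card V" "0 < K" by auto
qed

lemma sum_e_EV:
  assumes "bij_betw e {..<K} (Pow V)" "finite V"
  shows "(\<Sum>j<K. (1 / real K) * g (e j)) = EV V g"
proof -
  have "(\<Sum>j<K. g (e j)) = (\<Sum>A\<in>Pow V. g A)"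
    using sum.reindex_bij_betw[OF assms(1), of g] by simp
  then show ?thesis unfolding EV_def using bij_card_K[OF assms]
    by (simp add: sum_divide_distrib[symmetric])
qed

lemma T1_mixed:
  assumes p: "1 \<le> p" and e: "bij_betw e {..<K} (Pow ({1..m} \<times> {1..N}))"
    and NN: "K \<le> N'" "N < N'"
  shows "mixed_sum (Suc m) (conj_ereal p) (T1 p m N y e K) N' = sqrt (\<Sum>i\<in>{1..m} \<rightarrow>\<^sub>E {1..N}. (y i)^2)"
proof -
  have fV: "finite ({1..m} \<times> {1..N})" by simp
  have Kp: "0 < K" using bij_card_K[OF e fV] by simp
  define w where "w = 1 / real K"
  have w: "0 < w" "real K * w = 1" using Kp by (auto simp: w_def)
  have inner: "(\<Sum>j<N'. \<bar>coeff (Suc m) (T1 p m N y e K) j i'\<bar> powr p) powr (2 / p) =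
      (if i' \<in> {1..m} \<rightarrow>\<^sub>E {1..N} then (y i')^2 else 0)" if i': "i' \<in> {1..m} \<rightarrow>\<^sub>E {..<N'}" for i'
  proof (cases "i' \<in> {1..m} \<rightarrow>\<^sub>E {1..N}")
    case False
    then show ?thesis using T1_coeff[OF i', of p N y e K] using p by simp
  next
    case True
    have c: "\<bar>w powr (1/p) * y i' * chi (Sset m i') (e j)\<bar> powr p = w * \<bar>y i'\<bar> powr p" for j
    proof -
      have "\<bar>w powr (1/p) * y i' * chi (Sset m i') (e j)\<bar> = w powr (1/p) * \<bar>y i'\<bar>"
        by (simp add: abs_mult abs_chi)
      also have "\<dots> powr p = (w powr (1/p)) powr p * \<bar>y i'\<bar> powr p" using w by (simp add: powr_mult)
      also have "(w powr (1/p)) powr p = w" using w p by (simp add: powr_powr)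
      finally show ?thesis .
    qed
    have "(\<Sum>j<N'. \<bar>coeff (Suc m) (T1 p m N y e K) j i'\<bar> powr p) = (\<Sum>j<N'. if j < K then w * \<bar>y i'\<bar> powr p else 0)"
      using T1_coeff[OF i', of p N y e K] True c by (intro sum.cong refl) (auto simp: w_def)
    also have "\<dots> = (\<Sum>j\<in>{..<N'} \<inter> {..<K}. w * \<bar>y i'\<bar> powr p)"
      by (subst sum.inter_restrict) (auto simp: lessThan_def)
    also have "{..<N'} \<inter> {..<K} = {..<K}" using NN by auto
    also have "(\<Sum>j<K. w * \<bar>y i'\<bar> powr p) = \<bar>y i'\<bar> powr p" using w by simp
    finally have s: "(\<Sum>j<N'. \<bar>coeff (Suc m) (T1 p m N y e K) j i'\<bar> powr p) = \<bar>y i'\<bar> powr p" .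
    have "(\<bar>y i'\<bar> powr p) powr (2 / p) = \<bar>y i'\<bar> powr 2" using p by (simp add: powr_powr)
    also have "\<dots> = (y i')^2" by (cases "y i' = 0") (simp_all add: powr_numeral)
    finally show ?thesis unfolding s using True by simp
  qed
  have sub: "{1..m} \<rightarrow>\<^sub>E {1..N} \<subseteq> {1..m} \<rightarrow>\<^sub>E {..<N'}" using NN by (auto simp: PiE_def Pi_def)
  have "mixed_sum (Suc m) (conj_ereal p) (T1 p m N y e K) N' =
     (\<Sum>i'\<in>{1..m} \<rightarrow>\<^sub>E {..<N'}. (if i' \<in> {1..m} \<rightarrow>\<^sub>E {1..N} then (y i')^2 else 0)) powr (1/2)"
    unfolding mixed_sum_def conj_exp_conj[OF p]
    using inner by (simp add: atLeastLessThanSuc_atLeastAtMost cong: sum.cong)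
  also have "(\<Sum>i'\<in>{1..m} \<rightarrow>\<^sub>E {..<N'}. (if i' \<in> {1..m} \<rightarrow>\<^sub>E {1..N} then (y i')^2 else 0))
     = (\<Sum>i\<in>{1..m} \<rightarrow>\<^sub>E {1..N}. (y i)^2)"
    using sub by (subst sum.inter_restrict[symmetric]) (auto intro: finite_PiE simp: Int_absorb1)
  also have "\<dots> powr (1/2) = sqrt (\<Sum>i\<in>{1..m} \<rightarrow>\<^sub>E {1..N}. (y i)^2)"
    by (rule powr_half_sqrt) (simp add: sum_nonneg)
  finally show ?thesis .
qed

lemma T1_bound:
  assumes p: "1 \<le> p" and e: "bij_betw e {..<K} (Pow ({1..m} \<times> {1..N}))"
    and x: "x \<in> unit_tuples (Suc m) (conj_ereal p)"
  shows "\<bar>T1 p m N y e K x\<bar> \<le> (EV ({1..m} \<times> {1..N}) (\<lambda>A. \<bar>Gz m N y (\<lambda>_. 1) A\<bar> powr p)) powr (1/p)"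
proof -
  define V where "V = {1..m} \<times> {1..N}"
  have fV: "finite V" by (simp add: V_def)
  have Kp: "0 < K" using bij_card_K[OF e] by simp
  define w where "w = 1 / real K"
  have w: "0 < w" using Kp by (simp add: w_def)
  define zz where "zz = (\<lambda>v. x (fst v) (snd v))"
  define E1 where "E1 = EV V (\<lambda>A. \<bar>Gz m N y (\<lambda>_. 1) A\<bar> powr p)"
  have E1: "0 \<le> E1" unfolding E1_def by (rule EV_nonneg) simp
  have zz: "\<forall>v\<in>V. \<bar>zz v\<bar> \<le> 1"
    unfolding V_def zz_def using unit_tuple_slot(2)[OF x] by auto
  have C: "EV V (\<lambda>A. \<bar>Gz m N y zz A\<bar> powr p) \<le> E1"
    unfolding E1_def V_def by (rule contraction[OF p, of "{1..m} \<times> {1..N}" m N zz y]) (use zz V_def in auto)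
  have T: "T1 p m N y e K x = (\<Sum>j<K. x 0 j * (w powr (1/p) * Gz m N y zz (e j)))"
    unfolding T1_formula zz_def w_def ..
  have "\<bar>T1 p m N y e K x\<bar> \<le> (\<Sum>j<K. \<bar>x 0 j\<bar> * (w powr (1/p) * \<bar>Gz m N y zz (e j)\<bar>))"
    unfolding T by (rule order.trans[OF sum_abs]) (simp add: abs_mult)
  also have "\<dots> \<le> E1 powr (1/p)"
  proof (cases "p = 1")
    case True
    have "(\<Sum>j<K. \<bar>x 0 j\<bar> * (w powr (1/p) * \<bar>Gz m N y zz (e j)\<bar>)) \<le> (\<Sum>j<K. w * \<bar>Gz m N y zz (e j)\<bar>)"
    proof (rule sum_mono)
      fix j
      have "\<bar>x 0 j\<bar> \<le> 1" using unit_tuple_slot0_inf[of x "Suc m" j] x True by (simp add: conj_inf)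
      then show "\<bar>x 0 j\<bar> * (w powr (1/p) * \<bar>Gz m N y zz (e j)\<bar>) \<le> w * \<bar>Gz m N y zz (e j)\<bar>"
        using True w by (simp add: mult_left_le_one_le)
    qed
    also have "\<dots> = EV V (\<lambda>A. \<bar>Gz m N y zz A\<bar>)" unfolding w_def by (rule sum_e_EV[OF e[folded V_def] fV])
    also have "\<dots> \<le> E1" using C True by simp
    finally show ?thesis using True E1 by simp
  next
    case False
    then have p1: "1 < p" using p by simp
    define r where "r = p / (p - 1)"
    have r: "1 < r" "1/r + 1/p = 1" using p1 by (auto simp: r_def field_simps)
    have q: "conj_ereal p = ereal r" using conj_fin[OF p1] by (simp add: r_def)
    have x0: "x 0 \<in> lq_space r" "lq_norm r (x 0) \<le> 1" using unit_tuple_slot0_fin[of x "Suc m" r] x q by auto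
    have "(\<Sum>j<K. \<bar>x 0 j\<bar> * (w powr (1/p) * \<bar>Gz m N y zz (e j)\<bar>)) \<le>
        (\<Sum>j<K. \<bar>x 0 j\<bar> powr r) powr (1/r) * (\<Sum>j<K. (w powr (1/p) * \<bar>Gz m N y zz (e j)\<bar>) powr p) powr (1/p)"
      by (rule holder_sum) (use r p1 w in auto)
    also have "(\<Sum>j<K. (w powr (1/p) * \<bar>Gz m N y zz (e j)\<bar>) powr p) = (\<Sum>j<K. w * \<bar>Gz m N y zz (e j)\<bar> powr p)"
    proof (intro sum.cong refl)
      fix j
      have "(w powr (1/p) * \<bar>Gz m N y zz (e j)\<bar>) powr p = (w powr (1/p)) powr p * \<bar>Gz m N y zz (e j)\<bar> powr p"
        using w by (simp add: powr_mult)
      also have "(w powr (1/p)) powr p = w" using w p by (simp add: powr_powr)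
      finally show "(w powr (1/p) * \<bar>Gz m N y zz (e j)\<bar>) powr p = w * \<bar>Gz m N y zz (e j)\<bar> powr p" .
    qed
    also have "\<dots> = EV V (\<lambda>A. \<bar>Gz m N y zz A\<bar> powr p)" unfolding w_def by (rule sum_e_EV[OF e[folded V_def] fV])
    also have "(\<Sum>j<K. \<bar>x 0 j\<bar> powr r) powr (1/r) * (EV V (\<lambda>A. \<bar>Gz m N y zz A\<bar> powr p)) powr (1/p) \<le> 1 * E1 powr (1/p)"
    proof (rule mult_mono)
      show "(\<Sum>j<K. \<bar>x 0 j\<bar> powr r) powr (1/r) \<le> 1"
        using lq_partial_le[OF x0(1), of K] x0(2) r by simp
      show "(EV V (\<lambda>A. \<bar>Gz m N y zz A\<bar> powr p)) powr (1/p) \<le> E1 powr (1/p)"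
        using C p by (intro powr_mono2) (auto intro: EV_nonneg)
    qed auto
    finally show ?thesis by simp
  qed
  finally show ?thesis unfolding E1_def V_def .
qed

lemma part1:
  assumes p: "1 \<le> p" and D: "0 \<le> D"
    and DT: "\<forall>T. cont_multilinear_form (Suc m) (conj_ereal p) T \<longrightarrow>
          (\<forall>N. mixed_sum (Suc m) (conj_ereal p) T N \<le> D * form_norm (Suc m) (conj_ereal p) T)"
  shows "sqrt (\<Sum>i\<in>{1..m} \<rightarrow>\<^sub>E {1..N}. (y i)^2) \<le>
     D * (EV ({1..m} \<times> {1..N}) (\<lambda>A. \<bar>\<Sum>i\<in>{1..m} \<rightarrow>\<^sub>E {1..N}. y i * chi (Sset m i) A\<bar> powr p)) powr (1/p)"
proof -
  define V where "V = {1..m} \<times> {1..N}"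
  have fV: "finite (Pow V)" by (simp add: V_def)
  obtain e where e0: "bij_betw e {0..<card (Pow V)} (Pow V)" using ex_bij_betw_nat_finite[OF fV] by blast
  define K where "K = card (Pow V)"
  have e: "bij_betw e {..<K} (Pow ({1..m} \<times> {1..N}))" using e0 unfolding K_def V_def by (simp add: atLeast0LessThan)
  define J where "J = (EV ({1..m} \<times> {1..N}) (\<lambda>A. \<bar>Gz m N y (\<lambda>_. 1) A\<bar> powr p)) powr (1/p)"
  define T where "T = T1 p m N y e K"
  have bnd: "\<bar>T x\<bar> \<le> J" if "x \<in> unit_tuples (Suc m) (conj_ereal p)" for x
    unfolding T_def J_def by (rule T1_bound[OF p e that])
  have cont: "cont_multilinear_form (Suc m) (conj_ereal p) T"
    unfolding cont_multilinear_form_def T_def using T1_ml bnd[unfolded T_def]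
    by (auto intro!: bdd_aboveI2)
  have fn: "form_norm (Suc m) (conj_ereal p) T \<le> J"
    unfolding form_norm_def by (rule cSUP_least[OF unit_tuples_ne]) (rule bnd)
  have "sqrt (\<Sum>i\<in>{1..m} \<rightarrow>\<^sub>E {1..N}. (y i)^2) = mixed_sum (Suc m) (conj_ereal p) T (K + N + 1)"
    unfolding T_def by (rule T1_mixed[OF p e, symmetric]) auto
  also have "\<dots> \<le> D * form_norm (Suc m) (conj_ereal p) T" using DT cont by blast
  also have "\<dots> \<le> D * J" by (rule mult_left_mono[OF fn D])
  finally show ?thesis unfolding J_def Gz_one .
qed

lemma fn_upper:
  assumes "cont_multilinear_form M q T" "x \<in> unit_tuples M q"
  shows "\<bar>T x\<bar> \<le> form_norm M q T"
  using assms unfolding cont_multilinear_form_def form_norm_def by (intro cSUP_upper) auto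

lemma fn_nonneg:
  assumes "cont_multilinear_form M q T"
  shows "0 \<le> form_norm M q T"
  using fn_upper[OF assms zero_unit_tuple] by linarith

definition zA :: "nat \<Rightarrow> (nat \<times> nat) set \<Rightarrow> nat \<Rightarrow> nat \<Rightarrow> real" where
  "zA N A k = (\<lambda>n. if n < N then sg A (k, n) else 0)"

definition Xs :: "nat \<Rightarrow> nat \<Rightarrow> (nat \<times> nat) set \<Rightarrow> (nat \<Rightarrow> real) \<Rightarrow> nat \<Rightarrow> nat \<Rightarrow> real" where
  "Xs M N A u = (\<lambda>k. if k = 0 then u else if k < M then zA N A k else (\<lambda>_. 0))"

lemma zA_finsupp: "finsupp N (zA N A k)" unfolding finsupp_def zA_def by auto

lemma zA_norm: "c0_norm (zA N A k) \<le> 1"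
  by (rule c0_norm_le) (auto simp: zA_def abs_sg)

lemma Xs_tuples: "0 < M \<Longrightarrow> finsupp N' u \<Longrightarrow> Xs M N A u \<in> tuples M q"
  unfolding tuples_def Xs_def using zA_finsupp by (auto intro: finsupp_slot)

lemma Xs_unit:
  assumes "0 < M" "finsupp N' u" "slot_norm q 0 u \<le> 1"
  shows "Xs M N A u \<in> unit_tuples M q"
  unfolding unit_tuples_def using Xs_tuples[OF assms(1,2)] assms(3) zA_norm
  by (auto simp: Xs_def slot_norm_def)

lemma Xs_upd: "Xs M N A u = (Xs M N A (\<lambda>_. 0))(0 := u)"
  unfolding Xs_def by auto

lemma Sset_sub: "i \<in> {1..m} \<rightarrow>\<^sub>E B \<Longrightarrow> Sset m i \<subseteq> {1..m} \<times> B"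
  unfolding Sset_def by auto

lemma Sset_card: "card (Sset m i) = m"
  unfolding Sset_def by (subst card_image) (auto simp: inj_on_def)

lemma Sset_inj: "inj_on (Sset m) ({1..m} \<rightarrow>\<^sub>E B)"
proof (rule inj_onI)
  fix i i' assume i: "i \<in> {1..m} \<rightarrow>\<^sub>E B" and i': "i' \<in> {1..m} \<rightarrow>\<^sub>E B" and eq: "Sset m i = Sset m i'"
  show "i = i'"
  proof (rule PiE_ext[OF i i'])
    fix k assume k: "k \<in> {1..m}"
    have "(k, i k) \<in> Sset m i" unfolding Sset_def using k by blast
    then have "(k, i k) \<in> Sset m i'" using eq by simp
    then show "i k = i' k" unfolding Sset_def by auto
  qed
qed

lemma T_Xs_unit:
  assumes ml: "multilinear_form (Suc m) q T"
  shows "T (Xs (Suc m) N A (unit_vec j)) = (\<Sum>i\<in>{1..m} \<rightarrow>\<^sub>E {..<N}. coeff (Suc m) T j i * chi (Sset m i) A)"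
proof -
  have x: "Xs (Suc m) N A (unit_vec j) \<in> tuples (Suc m) q" by (rule Xs_tuples[OF _ finsupp_unit[of j "Suc j"]]) simp_all
  have fs: "\<forall>k\<in>{1..<Suc m}. finsupp N (Xs (Suc m) N A (unit_vec j) k)"
    using zA_finsupp by (auto simp: Xs_def)
  have "T (Xs (Suc m) N A (unit_vec j)) = (\<Sum>i\<in>{1..<Suc m} \<rightarrow>\<^sub>E {..<N}.
      (\<Prod>k\<in>{1..<Suc m}. Xs (Suc m) N A (unit_vec j) k (i k)) * coeff (Suc m) T j i)"
    by (rule ml_expand[OF ml x fs]) (auto simp: Xs_def)
  also have "\<dots> = (\<Sum>i\<in>{1..m} \<rightarrow>\<^sub>E {..<N}. coeff (Suc m) T j i * chi (Sset m i) A)"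
  proof -
    have e: "{1..<Suc m} = {1..m}" by auto
    show ?thesis unfolding e chi_Sset
      by (intro sum.cong refl) (auto simp: Xs_def zA_def mult.commute intro!: prod.cong)
  qed
  finally show ?thesis .
qed

lemma T_Xs_lin:
  assumes ml: "multilinear_form (Suc m) q T"
  shows "T (Xs (Suc m) N A (\<lambda>n. \<Sum>j<N. b j * unit_vec j n)) = (\<Sum>j<N. b j * T (Xs (Suc m) N A (unit_vec j)))"
proof -
  have x: "Xs (Suc m) N A (\<lambda>_. 0) \<in> tuples (Suc m) q" by (rule Xs_tuples[of _ 0]) (simp_all add: finsupp_def)
  show ?thesis
    using ml_sum[OF ml x _ _, of 0 "{..<N}" N "\<lambda>j. unit_vec j" b] finsupp_unit
    by (simp flip: Xs_upd)
qed

lemma ub_eq: "(\<lambda>n. \<Sum>j<N. b j * unit_vec j n) = (\<lambda>n. if n < N then b n else 0)"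
proof
  fix n
  show "(\<Sum>j<N. b j * unit_vec j n) = (if n < N then b n else 0)"
  proof (cases "n < N")
    case True
    then show ?thesis by (subst sum.remove[of _ n]) (auto simp: unit_vec_def)
  qed (auto simp: unit_vec_def)
qed

lemma ub_finsupp: "finsupp N (\<lambda>n. \<Sum>j<N. b j * unit_vec j n)"
  unfolding ub_eq finsupp_def by auto

lemma sgn_mult_self: "sgn (x::real) * x = \<bar>x\<bar>"
  by (cases rule: linorder_cases[of x 0]) auto

lemma dual_bound:
  assumes p: "1 \<le> p" and cont: "cont_multilinear_form (Suc m) (conj_ereal p) T"
  shows "(\<Sum>j<N. \<bar>T (Xs (Suc m) N A (unit_vec j))\<bar> powr p) powr (1/p) \<le> form_norm (Suc m) (conj_ereal p) T"
proof -
  define L where "L j = T (Xs (Suc m) N A (unit_vec j))" for j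
  define fn where "fn = form_norm (Suc m) (conj_ereal p) T"
  have ml: "multilinear_form (Suc m) (conj_ereal p) T" using cont unfolding cont_multilinear_form_def by simp
  have key: "\<bar>\<Sum>j<N. b j * L j\<bar> \<le> fn"
    if nb: "slot_norm (conj_ereal p) 0 (\<lambda>n. \<Sum>j<N. b j * unit_vec j n) \<le> 1" for b
  proof -
    have "(\<Sum>j<N. b j * L j) = T (Xs (Suc m) N A (\<lambda>n. \<Sum>j<N. b j * unit_vec j n))"
      unfolding L_def by (rule T_Xs_lin[OF ml, symmetric])
    moreover have "Xs (Suc m) N A (\<lambda>n. \<Sum>j<N. b j * unit_vec j n) \<in> unit_tuples (Suc m) (conj_ereal p)"
      by (rule Xs_unit[OF _ ub_finsupp nb]) simp
    ultimately show ?thesis unfolding fn_def using fn_upper[OF cont] by simp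
  qed
  have fn0: "0 \<le> fn" unfolding fn_def by (rule fn_nonneg[OF cont])
  show ?thesis unfolding L_def[symmetric] fn_def[symmetric]
  proof (cases "p = 1")
    case True
    have nb: "slot_norm (conj_ereal p) 0 (\<lambda>n. \<Sum>j<N. sgn (L j) * unit_vec j n) \<le> 1"
      unfolding True conj_inf slot_norm_def X_norm_def ub_eq
      by (simp, rule c0_norm_le) (auto simp: abs_sgn_eq)
    have "(\<Sum>j<N. sgn (L j) * L j) = (\<Sum>j<N. \<bar>L j\<bar>)" by (simp add: sgn_mult_self)
    then have "(\<Sum>j<N. \<bar>L j\<bar>) \<le> fn" using key[OF nb] by simp
    then show "(\<Sum>j<N. \<bar>L j\<bar> powr p) powr (1/p) \<le> fn" using True by (simp add: sum_nonneg)
  next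
    case False
    then have p1: "1 < p" using p by simp
    define r where "r = p / (p - 1)"
    have r: "1 < r" "(p - 1) * r = p" using p1 by (auto simp: r_def field_simps)
    have q: "conj_ereal p = ereal r" using conj_fin[OF p1] by (simp add: r_def)
    define S where "S = (\<Sum>j<N. \<bar>L j\<bar> powr p)"
    have S0: "0 \<le> S" unfolding S_def by (simp add: sum_nonneg)
    show "(\<Sum>j<N. \<bar>L j\<bar> powr p) powr (1/p) \<le> fn"
    proof (cases "S = 0")
      case True then show ?thesis unfolding S_def[symmetric] using fn0 by simp
    next
      case False
      then have Sp: "0 < S" using S0 by simp
      define b where "b j = sgn (L j) * \<bar>L j\<bar> powr (p - 1) / S powr ((p - 1) / p)" for j
      have babs: "\<bar>b j\<bar> powr r = \<bar>L j\<bar> powr p / S" for j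
      proof (cases "L j = 0")
        case True
        then show ?thesis using p1 r by (simp add: b_def)
      next
        case False
        have "\<bar>b j\<bar> = \<bar>L j\<bar> powr (p - 1) / S powr ((p - 1) / p)"
          using False Sp by (simp add: b_def abs_mult abs_sgn_eq)
        also have "\<dots> powr r = (\<bar>L j\<bar> powr (p - 1)) powr r / (S powr ((p - 1) / p)) powr r"
          using Sp by (simp add: powr_divide)
        also have "(\<bar>L j\<bar> powr (p - 1)) powr r = \<bar>L j\<bar> powr p" using r by (simp add: powr_powr)
        also have "(S powr ((p - 1) / p)) powr r = S" using r p1 Sp by (simp add: powr_powr r_def)
        finally show ?thesis .
      qed
      have nb: "slot_norm (conj_ereal p) 0 (\<lambda>n. \<Sum>j<N. b j * unit_vec j n) \<le> 1"
      proof -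
        have "slot_norm (conj_ereal p) 0 (\<lambda>n. \<Sum>j<N. b j * unit_vec j n) = lq_norm r (\<lambda>n. \<Sum>j<N. b j * unit_vec j n)"
          unfolding q slot_norm_def X_norm_def by simp
        also have "\<dots> = (\<Sum>n<N. \<bar>b n\<bar> powr r) powr (1/r)"
        proof -
          have "lq_norm r (\<lambda>n. \<Sum>j<N. b j * unit_vec j n) = (\<Sum>n<N. \<bar>\<Sum>j<N. b j * unit_vec j n\<bar> powr r) powr (1/r)"
            by (rule lq_norm_finsupp[OF ub_finsupp])
          also have "(\<Sum>n<N. \<bar>\<Sum>j<N. b j * unit_vec j n\<bar> powr r) = (\<Sum>n<N. \<bar>b n\<bar> powr r)"
            by (intro sum.cong refl) (simp add: ub_eq[of b N, THEN fun_cong])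
          finally show ?thesis .
        qed
        also have "(\<Sum>n<N. \<bar>b n\<bar> powr r) = 1" unfolding babs using Sp
          by (simp add: sum_divide_distrib[symmetric] S_def)
        finally show ?thesis by simp
      qed
      have bl: "b j * L j = \<bar>L j\<bar> powr p / S powr ((p - 1) / p)" for j
      proof -
        have "sgn (L j) * \<bar>L j\<bar> powr (p - 1) * L j = \<bar>L j\<bar> powr (p - 1) * \<bar>L j\<bar>"
          by (simp add: sgn_mult_self[symmetric] mult_ac)
        also have "\<dots> = \<bar>L j\<bar> powr p" using powr_split_nonneg[of "\<bar>L j\<bar>" p] p1 by (simp add: mult.commute)
        finally show ?thesis by (simp add: b_def)
      qed
      have "(\<Sum>j<N. b j * L j) = S / S powr ((p - 1) / p)"
        unfolding bl S_def by (simp add: sum_divide_distrib)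
      also have "\<dots> = S powr (1/p)"
      proof -
        have "S powr (1/p) * S powr ((p - 1) / p) = S" using Sp p1 by (simp add: powr_add[symmetric] add_divide_distrib[symmetric])
        then show ?thesis using Sp by (simp add: field_simps)
      qed
      finally have "S powr (1/p) \<le> fn" using key[OF nb] by simp
      then show ?thesis unfolding S_def .
    qed
  qed
qed

lemma EV_square_chaos:
  assumes "finite V" "\<forall>i\<in>I. S i \<subseteq> V" "inj_on S I" "finite I"
  shows "EV V (\<lambda>A. (\<Sum>i\<in>I. b i * chi (S i) A)^2) = (\<Sum>i\<in>I. (b i)^2)"
proof -
  have "EV V (\<lambda>A. (\<Sum>i\<in>I. b i * chi (S i) A)^2) = EV V (\<lambda>A. \<Sum>i\<in>I. \<Sum>i'\<in>I. b i * b i' * (chi (S i) A * chi (S i') A))"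
    by (rule EV_cong) (simp add: power2_eq_square sum_product mult_ac)
  also have "\<dots> = (\<Sum>i\<in>I. \<Sum>i'\<in>I. b i * b i' * EV V (\<lambda>A. chi (S i) A * chi (S i') A))"
    by (simp add: EV_sum EV_cmult)
  also have "\<dots> = (\<Sum>i\<in>I. \<Sum>i'\<in>I. if i = i' then b i * b i' else 0)"
  proof (intro sum.cong refl)
    fix i i' assume "i \<in> I" "i' \<in> I"
    then have "(S i = S i') = (i = i')" using assms(3) by (auto dest: inj_onD)
    then show "b i * b i' * EV V (\<lambda>A. chi (S i) A * chi (S i') A) = (if i = i' then b i * b i' else 0)"
      using EV_chi_orth[OF assms(1), of "S i" "S i'"] assms(2) \<open>i \<in> I\<close> \<open>i' \<in> I\<close> by auto
  qed
  also have "\<dots> = (\<Sum>i\<in>I. (b i)^2)" using assms(4) by (simp add: power2_eq_square)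
  finally show ?thesis .
qed

lemma khin_j:
  assumes p: "1 \<le> p"
  shows "sqrt (\<Sum>i\<in>{1..m} \<rightarrow>\<^sub>E {..<N}. (b i)^2) \<le>
    3^m * (EV ({1..m} \<times> {..<N}) (\<lambda>A. \<bar>\<Sum>i\<in>{1..m} \<rightarrow>\<^sub>E {..<N}. b i * chi (Sset m i) A\<bar> powr p)) powr (1/p)"
proof -
  define V where "V = {1..m} \<times> {..<N}"
  define I where "I = {1..m} \<rightarrow>\<^sub>E {..<N}"
  have fV: "finite V" "finite I" by (auto simp: V_def I_def intro: finite_PiE)
  have SV: "\<forall>i\<in>I. Sset m i \<subseteq> V \<and> card (Sset m i) \<le> m" using Sset_sub Sset_card by (auto simp: I_def V_def)
  have "(\<Sum>i\<in>I. (b i)^2) = EV V (\<lambda>A. (\<Sum>i\<in>I. b i * chi (Sset m i) A)^2)"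
    by (rule EV_square_chaos[symmetric]) (use fV SV Sset_inj in \<open>auto simp: I_def\<close>)
  then have "sqrt (\<Sum>i\<in>I. (b i)^2) \<le> 3^m * EV V (\<lambda>A. \<bar>\<Sum>i\<in>I. b i * chi (Sset m i) A\<bar>)"
    using khintchine_chaos[OF fV(1) fV(2) SV, of b] by simp
  also have "\<dots> \<le> 3^m * (EV V (\<lambda>A. \<bar>\<Sum>i\<in>I. b i * chi (Sset m i) A\<bar> powr p)) powr (1/p)"
    by (rule mult_left_mono[OF EV_jensen[OF fV(1) p]]) simp
  finally show ?thesis unfolding V_def I_def .
qed

lemma D_bound:
  assumes p: "1 \<le> p" "p \<le> 2" and cont: "cont_multilinear_form (Suc m) (conj_ereal p) T"
  shows "mixed_sum (Suc m) (conj_ereal p) T N \<le> 3^m * form_norm (Suc m) (conj_ereal p) T"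
proof -
  define fn where "fn = form_norm (Suc m) (conj_ereal p) T"
  define I where "I = {1..m} \<rightarrow>\<^sub>E {..<N}"
  define V where "V = {1..m} \<times> {..<N}"
  define c where "c j i = coeff (Suc m) T j i" for j i
  define E where "E j = EV V (\<lambda>A. \<bar>\<Sum>i\<in>I. c j i * chi (Sset m i) A\<bar> powr p)" for j
  have fI: "finite I" "finite V" by (auto simp: I_def V_def intro: finite_PiE)
  have ml: "multilinear_form (Suc m) (conj_ereal p) T" using cont unfolding cont_multilinear_form_def by simp
  have fn0: "0 \<le> fn" unfolding fn_def by (rule fn_nonneg[OF cont])
  have E0: "0 \<le> E j" for j unfolding E_def by (rule EV_nonneg) simp
  have p0: "0 < p" using p by simp
  have Esum: "(\<Sum>j<N. E j) \<le> fn powr p"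
  proof -
    have pt: "(\<Sum>j<N. \<bar>\<Sum>i\<in>I. c j i * chi (Sset m i) A\<bar> powr p) \<le> fn powr p" for A
    proof -
      define X where "X = (\<Sum>j<N. \<bar>\<Sum>i\<in>I. c j i * chi (Sset m i) A\<bar> powr p)"
      have X0: "0 \<le> X" unfolding X_def by (simp add: sum_nonneg)
      have "X powr (1/p) \<le> fn"
        using dual_bound[OF p(1) cont, of N A] unfolding X_def fn_def c_def I_def
        by (simp add: T_Xs_unit[OF ml])
      then have "(X powr (1/p)) powr p \<le> fn powr p" using X0 p0 by (intro powr_mono2) auto
      then show ?thesis using X0 p0 by (simp add: powr_powr X_def)
    qed
    have "(\<Sum>j<N. E j) = EV V (\<lambda>A. \<Sum>j<N. \<bar>\<Sum>i\<in>I. c j i * chi (Sset m i) A\<bar> powr p)"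
      unfolding E_def by (simp add: EV_sum)
    also have "\<dots> \<le> EV V (\<lambda>_. fn powr p)" by (rule EV_mono) (rule pt)
    also have "\<dots> = fn powr p" by (rule EV_const[OF fI(2)])
    finally show ?thesis .
  qed
  have KJ: "(\<Sum>i\<in>I. (c j i)^2) powr (p/2) \<le> (3^m) powr p * E j" for j
  proof -
    define s where "s = sqrt (\<Sum>i\<in>I. (c j i)^2)"
    have nn0: "0 \<le> (\<Sum>i\<in>I. (c j i)^2)" by (intro sum_nonneg) simp
    have s0: "0 \<le> s" unfolding s_def using nn0 by simp
    have "s \<le> 3^m * (E j) powr (1/p)" unfolding s_def E_def I_def V_def by (rule khin_j[OF p(1)])
    then have "s powr p \<le> (3^m * (E j) powr (1/p)) powr p" using s0 p0 by (intro powr_mono2) auto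
    also have "\<dots> = (3^m) powr p * E j" using E0[of j] p0 by (simp add: powr_mult powr_powr)
    also have "s powr p = (\<Sum>i\<in>I. (c j i)^2) powr (p/2)"
    proof -
      have nn: "0 \<le> (\<Sum>i\<in>I. (c j i)^2)" by (intro sum_nonneg) simp
      have e1: "(\<Sum>i\<in>I. (c j i)^2) = s powr 2" unfolding s_def
        using nn by (cases "(\<Sum>i\<in>I. (c j i)^2) = 0") (auto simp: powr_numeral)
      show ?thesis unfolding e1 powr_powr by simp
    qed
    finally show ?thesis .
  qed
  define r where "r = 2 / p"
  have r: "1 \<le> r" "0 < r" using p by (auto simp: r_def field_simps)
  define X where "X = (\<Sum>i\<in>I. (\<Sum>j<N. \<bar>c j i\<bar> powr p) powr r)"
  have X0: "0 \<le> X" unfolding X_def by (simp add: sum_nonneg)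
  have "X powr (1/r) \<le> (\<Sum>j<N. (\<Sum>i\<in>I. (\<bar>c j i\<bar> powr p) powr r) powr (1/r))"
    unfolding X_def by (rule minkowski) (use fI r in auto)
  also have "\<dots> = (\<Sum>j<N. (\<Sum>i\<in>I. (c j i)^2) powr (p/2))"
  proof (intro sum.cong refl arg_cong2[where f="(powr)"])
    fix j i
    have "(\<bar>c j i\<bar> powr p) powr r = \<bar>c j i\<bar> powr 2" using p0 by (simp add: powr_powr r_def)
    also have "\<dots> = (c j i)^2" by (cases "c j i = 0") (simp_all add: powr_numeral)
    finally show "(\<bar>c j i\<bar> powr p) powr r = (c j i)^2" .
  qed (simp add: r_def)
  also have "\<dots> \<le> (\<Sum>j<N. (3^m) powr p * E j)" by (rule sum_mono) (rule KJ)
  also have "\<dots> = (3^m) powr p * (\<Sum>j<N. E j)" by (simp add: sum_distrib_left)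
  also have "\<dots> \<le> (3^m) powr p * fn powr p" by (rule mult_left_mono[OF Esum]) simp
  also have "\<dots> = (3^m * fn) powr p" using fn0 by (simp add: powr_mult)
  finally have Xb: "X powr (1/r) \<le> (3^m * fn) powr p" .
  have "mixed_sum (Suc m) (conj_ereal p) T N = X powr (1/2)"
  proof -
    have e: "{1..<Suc m} = {1..m}" by auto
    show ?thesis unfolding mixed_sum_def conj_exp_conj[OF p(1)] e X_def I_def r_def c_def ..
  qed
  also have "X powr (1/2) = (X powr (1/r)) powr (1/p)" using r p0 by (simp add: powr_powr r_def)
  also have "\<dots> \<le> ((3^m * fn) powr p) powr (1/p)" using Xb X0 p0 by (intro powr_mono2) auto
  also have "\<dots> = 3^m * fn" using fn0 p0 by (simp add: powr_powr)
  finally show ?thesis unfolding fn_def .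
qed

lemma restrict01_finite: "finite_measure (restrict_space lborel {0..1::real})"
  by (rule finite_measureI) (simp add: space_restrict_space emeasure_restrict_space)

lemma abs_rademacher: "\<bar>rademacher j t\<bar> \<le> 1"
  unfolding rademacher_def by (simp add: abs_sgn_eq)

lemma g_meas: "(\<lambda>t. \<bar>\<Sum>j\<in>{1..n}. rademacher j t * a j\<bar> powr p) \<in> borel_measurable (restrict_space lborel {0..1::real})"
  by (rule measurable_restrict_space1) measurable

lemma g_int:
  assumes "0 \<le> p"
  shows "integrable (restrict_space lborel {0..1::real}) (\<lambda>t. \<bar>\<Sum>j\<in>{1..n}. rademacher j t * a j\<bar> powr p)"
proof (rule finite_measure.integrable_const_bound[OF restrict01_finite _ g_meas])
  show "AE x in restrict_space lborel {0..1}. norm (\<bar>\<Sum>j\<in>{1..n}. rademacher j x * a j\<bar> powr p) \<le> (\<Sum>j\<in>{1..n}. \<bar>a j\<bar>) powr p"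
  proof (rule AE_I2)
    fix x
    have "\<bar>\<Sum>j\<in>{1..n}. rademacher j x * a j\<bar> \<le> (\<Sum>j\<in>{1..n}. \<bar>rademacher j x * a j\<bar>)" by (rule sum_abs)
    also have "\<dots> \<le> (\<Sum>j\<in>{1..n}. \<bar>a j\<bar>)"
      by (rule sum_mono) (simp add: abs_mult mult_left_le_one_le abs_rademacher)
    finally have "\<bar>\<Sum>j\<in>{1..n}. rademacher j x * a j\<bar> powr p \<le> (\<Sum>j\<in>{1..n}. \<bar>a j\<bar>) powr p"
      by (rule powr_mono2[OF assms abs_ge_zero])
    then show "norm (\<bar>\<Sum>j\<in>{1..n}. rademacher j x * a j\<bar> powr p) \<le> (\<Sum>j\<in>{1..n}. \<bar>a j\<bar>) powr p" by simp
  qed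
qed

lemma tensor_integral:
  assumes "0 \<le> p"
  shows "integral\<^sup>L (PMm m) (\<lambda>t. \<bar>\<Sum>i\<in>({1..m} \<rightarrow>\<^sub>E {1..n}). (\<Prod>k\<in>{1..m}. rademacher (i k) (t k)) * (\<Prod>k\<in>{1..m}. a (i k))\<bar> powr p)
    = (LINT t:{0..1}|lborel. \<bar>\<Sum>j=1..n. a j * rademacher j t\<bar> powr p) ^ m"
proof -
  define g where "g t = \<bar>\<Sum>j\<in>{1..n}. rademacher j t * a j\<bar> powr p" for t
  have pt: "\<bar>\<Sum>i\<in>({1..m} \<rightarrow>\<^sub>E {1..n}). (\<Prod>k\<in>{1..m}. rademacher (i k) (t k)) * (\<Prod>k\<in>{1..m}. a (i k))\<bar> powr p
      = (\<Prod>k\<in>{1..m}. g (t k))" for t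
  proof -
    have "(\<Sum>i\<in>({1..m} \<rightarrow>\<^sub>E {1..n}). (\<Prod>k\<in>{1..m}. rademacher (i k) (t k)) * (\<Prod>k\<in>{1..m}. a (i k)))
        = (\<Sum>i\<in>({1..m} \<rightarrow>\<^sub>E {1..n}). \<Prod>k\<in>{1..m}. rademacher (i k) (t k) * a (i k))"
      by (simp add: prod.distrib)
    also have "\<dots> = (\<Prod>k\<in>{1..m}. \<Sum>j\<in>{1..n}. rademacher j (t k) * a j)"
      by (rule prod_sum_PiE[symmetric]) auto
    finally show ?thesis unfolding g_def by (simp add: abs_prod prod_powr_distrib)
  qed
  have "integral\<^sup>L (PMm m) (\<lambda>t. \<bar>\<Sum>i\<in>({1..m} \<rightarrow>\<^sub>E {1..n}). (\<Prod>k\<in>{1..m}. rademacher (i k) (t k)) * (\<Prod>k\<in>{1..m}. a (i k))\<bar> powr p)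
     = integral\<^sup>L (PMm m) (\<lambda>t. \<Prod>k\<in>{1..m}. g (t k))" unfolding pt ..
  also have "\<dots> = (\<Prod>k\<in>{1..m}. integral\<^sup>L (restrict_space lborel {0..1::real}) g)"
    by (rule RU.product_integral_prod) (use g_int[OF assms] in \<open>auto simp: g_def\<close>)
  also have "\<dots> = (integral\<^sup>L (restrict_space lborel {0..1::real}) g) ^ m" by simp
  also have "integral\<^sup>L (restrict_space lborel {0..1::real}) g = (LINT t:{0..1}|lborel. \<bar>\<Sum>j=1..n. a j * rademacher j t\<bar> powr p)"
    unfolding set_lebesgue_integral_def
    by (subst integral_restrict_space) (auto simp: g_def mult.commute)
  finally show ?thesis .
qed

lemma pow_powr: "0 \<le> (x::real) \<Longrightarrow> (x ^ n) powr r = (x powr r) ^ n"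
  by (induction n) (simp_all add: powr_mult)

lemma LINT_nonneg: "0 \<le> (LINT t:{0..1}|lborel. \<bar>f t :: real\<bar> powr p)"
  unfolding set_lebesgue_integral_def
  by (rule integral_nonneg_AE) (auto simp: indicator_def)

theorem theorem4p3:
  fixes p :: real and m :: nat
  assumes "1 \<le> p" and "p \<le> 2" and "m \<ge> 2"
  shows "(\<forall>(N::nat) (y::(nat \<Rightarrow> nat) \<Rightarrow> real).
            sqrt (\<Sum>i\<in>({1..m} \<rightarrow>\<^sub>E {1..N}). (y i)\<^sup>2)
            \<le> D_const (m + 1) (conj_ereal p) *
               (integral\<^sup>L (Pi\<^sub>M {1..m} (\<lambda>_. restrict_space lborel {0..1}))
                  (\<lambda>t. \<bar>\<Sum>i\<in>({1..m} \<rightarrow>\<^sub>E {1..N}).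
                          (\<Prod>k\<in>{1..m}. rademacher (i k) (t k)) * y i\<bar> powr p)) powr (1 / p))
         \<and> khintchine_A p ^ m \<le> D_const (m + 1) (conj_ereal p)"
proof -
  define q where "q = conj_ereal p"
  define DS where "DS = {D. D \<ge> 0 \<and> (\<forall>T. cont_multilinear_form (m + 1) q T \<longrightarrow>
                         (\<forall>N. mixed_sum (m + 1) q T N \<le> D * form_norm (m + 1) q T))}"
  have Dc: "D_const (m + 1) (conj_ereal p) = Inf DS" unfolding D_const_def DS_def q_def ..
  have mem: "(3::real)^m \<in> DS" unfolding DS_def q_def using D_bound[OF assms(1,2)] by auto
  have ne: "DS \<noteq> {}" using mem by blast
  have Dc0: "0 \<le> Inf DS" by (rule cInf_greatest[OF ne]) (auto simp: DS_def)
  have partA: "sqrt (\<Sum>i\<in>{1..m} \<rightarrow>\<^sub>E {1..N}. (y i)^2) \<le>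
     Inf DS * (EV ({1..m} \<times> {1..N}) (\<lambda>A. \<bar>\<Sum>i\<in>{1..m} \<rightarrow>\<^sub>E {1..N}. y i * chi (Sset m i) A\<bar> powr p)) powr (1/p)"
    for N y
  proof -
    define J where "J = (EV ({1..m} \<times> {1..N}) (\<lambda>A. \<bar>\<Sum>i\<in>{1..m} \<rightarrow>\<^sub>E {1..N}. y i * chi (Sset m i) A\<bar> powr p)) powr (1/p)"
    define L where "L = sqrt (\<Sum>i\<in>{1..m} \<rightarrow>\<^sub>E {1..N}. (y i)^2)"
    have J0: "0 \<le> J" unfolding J_def by simp
    have each: "L \<le> D * J" if D: "D \<in> DS" for D
      unfolding L_def J_def
      by (rule part1[OF assms(1)]) (use D in \<open>auto simp: DS_def q_def\<close>)
    have "L \<le> Inf DS * J"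
    proof (cases "J = 0")
      case True
      then have "L \<le> 0" using each[OF mem] by simp
      then show ?thesis using True by simp
    next
      case False
      then have Jp: "0 < J" using J0 by simp
      have "L / J \<le> Inf DS"
        by (rule cInf_greatest[OF ne]) (use each Jp in \<open>auto simp: pos_divide_le_eq\<close>)
      then show ?thesis using Jp by (simp add: pos_divide_le_eq)
    qed
    then show ?thesis unfolding L_def J_def .
  qed
  have conj1: "\<forall>(N::nat) (y::(nat \<Rightarrow> nat) \<Rightarrow> real).
            sqrt (\<Sum>i\<in>({1..m} \<rightarrow>\<^sub>E {1..N}). (y i)\<^sup>2)
            \<le> D_const (m + 1) (conj_ereal p) *
               (integral\<^sup>L (Pi\<^sub>M {1..m} (\<lambda>_. restrict_space lborel {0..1}))
                  (\<lambda>t. \<bar>\<Sum>i\<in>({1..m} \<rightarrow>\<^sub>E {1..N}).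
                          (\<Prod>k\<in>{1..m}. rademacher (i k) (t k)) * y i\<bar> powr p)) powr (1 / p)"
    unfolding Dc rad_bridge using partA by simp
  define KS where "KS = {A. \<forall>(n::nat) (a::nat \<Rightarrow> real).
      sqrt (\<Sum>j=1..n. (a j)\<^sup>2) \<le>
        A * (LINT t:{0..1}|lborel. \<bar>\<Sum>j=1..n. a j * rademacher j t\<bar> powr p) powr (1 / p)}"
  have KA: "khintchine_A p = Inf KS" unfolding khintchine_A_def KS_def ..
  have m0: "0 < m" using assms(3) by simp
  define R where "R = root m (Inf DS)"
  have R0: "0 \<le> R" unfolding R_def using Dc0 by (rule real_root_ge_zero)
  have Rm: "R ^ m = Inf DS" unfolding R_def using Dc0 m0 by simp
  have RK: "R \<in> KS" unfolding KS_def
  proof (intro CollectI allI)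
    fix n :: nat and a :: "nat \<Rightarrow> real"
    define S where "S = (\<Sum>j=1..n. (a j)^2)"
    define Jn where "Jn = (LINT t:{0..1}|lborel. \<bar>\<Sum>j=1..n. a j * rademacher j t\<bar> powr p)"
    define X where "X = Jn powr (1/p)"
    have Jn0: "0 \<le> Jn" unfolding Jn_def by (rule LINT_nonneg)
    have X0: "0 \<le> X" unfolding X_def by simp
    define y where "y i = (\<Prod>k\<in>{1..m}. a (i k))" for i :: "nat \<Rightarrow> nat"
    have sq: "(\<Sum>i\<in>{1..m} \<rightarrow>\<^sub>E {1..n}. (y i)^2) = S ^ m"
    proof -
      have "(\<Sum>i\<in>{1..m} \<rightarrow>\<^sub>E {1..n}. (y i)^2) = (\<Sum>i\<in>{1..m} \<rightarrow>\<^sub>E {1..n}. \<Prod>k\<in>{1..m}. (a (i k))^2)"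
        unfolding y_def by (simp add: prod_power_distrib)
      also have "\<dots> = (\<Prod>k\<in>{1..m}. \<Sum>j\<in>{1..n}. (a j)^2)" by (rule prod_sum_PiE[symmetric]) auto
      also have "\<dots> = S ^ m" unfolding S_def by simp
      finally show ?thesis .
    qed
    have "EV ({1..m} \<times> {1..n}) (\<lambda>A. \<bar>\<Sum>i\<in>{1..m} \<rightarrow>\<^sub>E {1..n}. y i * chi (Sset m i) A\<bar> powr p)
        = integral\<^sup>L (PMm m) (\<lambda>t. \<bar>\<Sum>i\<in>({1..m} \<rightarrow>\<^sub>E {1..n}). (\<Prod>k\<in>{1..m}. rademacher (i k) (t k)) * y i\<bar> powr p)"
      by (rule rad_bridge[symmetric])
    also have "\<dots> = Jn ^ m" unfolding y_def Jn_def by (rule tensor_integral) (use assms in simp)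
    finally have ev: "EV ({1..m} \<times> {1..n}) (\<lambda>A. \<bar>\<Sum>i\<in>{1..m} \<rightarrow>\<^sub>E {1..n}. y i * chi (Sset m i) A\<bar> powr p) = Jn ^ m" .
    have "sqrt S ^ m \<le> Inf DS * X ^ m"
      using partA[where N=n and y=y] unfolding sq ev X_def by (simp add: real_sqrt_power pow_powr[OF Jn0])
    also have "\<dots> = (R * X) ^ m" by (simp add: power_mult_distrib Rm)
    finally have "sqrt S ^ Suc (m - 1) \<le> (R * X) ^ Suc (m - 1)" using m0 by simp
    then have "sqrt S \<le> R * X" by (rule power_le_imp_le_base) (use R0 X0 in simp)
    then show "sqrt (\<Sum>j=1..n. (a j)\<^sup>2) \<le> R * (LINT t:{0..1}|lborel. \<bar>\<Sum>j=1..n. a j * rademacher j t\<bar> powr p) powr (1 / p)"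
      unfolding S_def X_def Jn_def .
  qed
  have KS0: "0 \<le> A" if "A \<in> KS" for A
  proof (rule ccontr)
    assume "\<not> 0 \<le> A"
    then have An: "A < 0" by simp
    define Y where "Y = (LINT t:{0..1}|lborel. \<bar>\<Sum>j=1..1. (\<lambda>_. 1::real) j * rademacher j t\<bar> powr p) powr (1 / p)"
    have Y0: "0 \<le> Y" unfolding Y_def by simp
    have all: "\<forall>(n::nat) (a::nat \<Rightarrow> real). sqrt (\<Sum>j=1..n. (a j)\<^sup>2) \<le>
        A * (LINT t:{0..1}|lborel. \<bar>\<Sum>j=1..n. a j * rademacher j t\<bar> powr p) powr (1 / p)"
      using that unfolding KS_def by simp
    have "1 \<le> A * Y" using spec[OF spec[OF all, of 1], of "\<lambda>_. 1"] unfolding Y_def by simp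
    moreover have "A * Y \<le> 0" using An Y0 by (simp add: mult_nonpos_nonneg)
    ultimately show False by simp
  qed
  have KSne: "KS \<noteq> {}" using RK by blast
  have KAle: "Inf KS \<le> R" by (rule cInf_lower[OF RK]) (use KS0 in \<open>auto intro: bdd_belowI[of _ 0]\<close>)
  have KA0: "0 \<le> Inf KS" by (rule cInf_greatest[OF KSne]) (rule KS0)
  have conj2: "khintchine_A p ^ m \<le> D_const (m + 1) (conj_ereal p)"
    unfolding KA Dc Rm[symmetric] by (rule power_mono[OF KAle KA0])
  show ?thesis using conj1 conj2 by blast
qed

end
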